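(* Every rectangular satin has even order $n$. If $n\equiv 2 \pmod 4$, the satin belongs to species $26_o$; if $4\mid n$, it belongs to species $26_e$.
   Context: A prefabric consists of two perpendicular layers of unit-width strands, warps (vertical) and wefts (horizontal). The plane is divided into unit square cells. Each cell is dark if the warp is on top (seen from the front) and pale otherwise. A symmetry is an isometry of the plane, possibly combined with the side reversal $\tau$, that preserves the prefabric. $G_1$ denotes the planar part of the symmetry group, and $H_1$ its side-preserving subgroup. The $(n,s)$ satin, with $1<s<n-1$ and $\gcd(n,s)=1$, is the design of period $n$ in which row $i$ has its single dark cell in column $is \bmod n$. It is isonemal iff $s^2\equiv\pm1\pmod n$. It is square iff $s^2\equiv -1 \pmod n$. A non-square isonemal satin is called rectangular if $n$ is even and $s^2\equiv 1\pmod{2n}$. A prefabric belongs to species 26 if: - $G_1$ is of crystallographic type $pmm$, with mirrors at $45^\circ$ to the strands, every mirror symmetry being combined with $\tau$; - $H_1$ is of type $p2$, consisting of translations and side-preserving half-turns; - some half-turn centres lie at cell centres and others at cell corners. Within species 26: - Species $26_o$: every mirror carries half-turn centres alternately at cell centres and cell corners. Equivalently, a quarter of the $G_1$ lattice unit measures $a\delta$ by $b\delta$ with $a,b$ both odd, where $\delta$ is the length of a cell diagonal. - Species $26_e$: the mirrors in one direction contain alternately only cell-centre and only cell-corner half-turn centres, while the mirrors in the other direction each contain both kinds alternately. Equivalently, the corresponding dimensions are $a\delta$ by $b\delta$ with $a$ odd and $b$ even. *)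

theory Defs
  imports Complex_Main "HOL-Number_Theory.Cong"
begin

text \<open>Cell (i,j) is the unit square with lower left
corner (i,j): i is the column index (position along the horizontal), j is the row
index. Warps are vertical strands, wefts horizontal. A prefabric is given by its
design: dark i j holds iff in cell (column i, row j) the warp is on top.\<close>

definition cell :: "int \<Rightarrow> int \<Rightarrow> complex set" where
  "cell i j = {z. of_int i \<le> Re z \<and> Re z \<le> of_int i + 1 \<and>
                  of_int j \<le> Im z \<and> Im z \<le> of_int j + 1}"

definition isometry :: "(complex \<Rightarrow> complex) \<Rightarrow> bool" where
  "isometry g \<longleftrightarrow> (\<forall>z w. dist (g z) (g w) = dist z w)"

text \<open>A grid-preserving isometry interchanges warps and wefts iff it maps the
vertical unit segment from 0 to i to a horizontal segment.\<close>
definition swaps_strands :: "(complex \<Rightarrow> complex) \<Rightarrow> bool" where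
  "swaps_strands g \<longleftrightarrow> Im (g \<i>) = Im (g 0)"

text \<open>is_symmetry dark g flip: the isometry g, combined with the side reversal tau
iff flip, preserves the prefabric. The image of a cell has the same strand on top
(seen from the front) iff neither or both of the strand interchange and the
side reversal occur.\<close>
definition is_symmetry :: "(int \<Rightarrow> int \<Rightarrow> bool) \<Rightarrow> (complex \<Rightarrow> complex) \<Rightarrow> bool \<Rightarrow> bool" where
  "is_symmetry dark g flip \<longleftrightarrow> isometry g \<and>
     (\<forall>i j. \<exists>i' j'. g ` cell i j = cell i' j' \<and>
        (dark i' j' \<longleftrightarrow> (dark i j \<noteq> (swaps_strands g \<noteq> flip))))"

definition G1 :: "(int \<Rightarrow> int \<Rightarrow> bool) \<Rightarrow> (complex \<Rightarrow> complex) set" where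
  "G1 dark = {g. \<exists>flip. is_symmetry dark g flip}"

definition H1 :: "(int \<Rightarrow> int \<Rightarrow> bool) \<Rightarrow> (complex \<Rightarrow> complex) set" where
  "H1 dark = {g. is_symmetry dark g False}"

definition gauss_ints :: "complex set" where
  "gauss_ints = {of_int m + of_int k * \<i> | m k. True}"

definition pmm_std :: "(complex \<Rightarrow> complex) set" where
  "pmm_std = {(\<lambda>z. p z + t) | p t.
      p \<in> {(\<lambda>w. w), (\<lambda>w. - w), (\<lambda>w. cnj w), (\<lambda>w. - cnj w)} \<and> t \<in> gauss_ints}"

definition p2_std :: "(complex \<Rightarrow> complex) set" where
  "p2_std = {(\<lambda>z. p z + t) | p t. p \<in> {(\<lambda>w. w), (\<lambda>w. - w)} \<and> t \<in> gauss_ints}"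

definition real_affine :: "(complex \<Rightarrow> complex) \<Rightarrow> bool" where
  "real_affine \<phi> \<longleftrightarrow> (\<exists>a b c. \<forall>z. \<phi> z = a * z + b * cnj z + c)"

text \<open>G has the crystallographic type of the standard group S: it is conjugate to S
by an (invertible) affine map of the plane.\<close>
definition same_type :: "(complex \<Rightarrow> complex) set \<Rightarrow> (complex \<Rightarrow> complex) set \<Rightarrow> bool" where
  "same_type G S \<longleftrightarrow> (\<exists>\<phi> \<psi>. real_affine \<phi> \<and> (\<forall>z. \<psi> (\<phi> z) = z) \<and> (\<forall>z. \<phi> (\<psi> z) = z) \<and>
       G = (\<lambda>s. \<phi> \<circ> s \<circ> \<psi>) ` S)"

definition type_pmm :: "(complex \<Rightarrow> complex) set \<Rightarrow> bool" where
  "type_pmm G \<longleftrightarrow> same_type G pmm_std"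

definition type_p2 :: "(complex \<Rightarrow> complex) set \<Rightarrow> bool" where
  "type_p2 G \<longleftrightarrow> same_type G p2_std"

definition line_dir :: "complex \<Rightarrow> complex \<Rightarrow> complex set" where
  "line_dir a d = {a + of_real x * d | x. True}"

definition parallel_to :: "complex set \<Rightarrow> complex \<Rightarrow> bool" where
  "parallel_to l d \<longleftrightarrow> (\<exists>a. l = line_dir a d)"

definition is_mirror :: "(complex \<Rightarrow> complex) \<Rightarrow> bool" where
  "is_mirror g \<longleftrightarrow> isometry g \<and> g \<noteq> id \<and> (\<exists>a d. d \<noteq> 0 \<and> (\<forall>z \<in> line_dir a d. g z = z))"

definition mirror_lines :: "(complex \<Rightarrow> complex) set \<Rightarrow> complex set set" where
  "mirror_lines G = {{z. g z = z} | g. g \<in> G \<and> is_mirror g}"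

definition half_turn :: "complex \<Rightarrow> complex \<Rightarrow> complex" where
  "half_turn c = (\<lambda>z. 2 * c - z)"

definition half_turn_centres :: "(complex \<Rightarrow> complex) set \<Rightarrow> complex set" where
  "half_turn_centres G = {c. half_turn c \<in> G}"

definition is_cell_centre :: "complex \<Rightarrow> bool" where
  "is_cell_centre c \<longleftrightarrow> (\<exists>i j::int. c = Complex (of_int i + 1/2) (of_int j + 1/2))"

definition is_cell_corner :: "complex \<Rightarrow> bool" where
  "is_cell_corner c \<longleftrightarrow> (\<exists>i j::int. c = Complex (of_int i) (of_int j))"

definition strictly_between :: "complex \<Rightarrow> complex \<Rightarrow> complex \<Rightarrow> bool" where
  "strictly_between c1 c2 c \<longleftrightarrow> (\<exists>u::real. 0 < u \<and> u < 1 \<and> c = c1 + of_real u * (c2 - c1))"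

definition alternating_on :: "complex set \<Rightarrow> complex set \<Rightarrow> bool" where
  "alternating_on C l \<longleftrightarrow>
     C \<inter> l \<noteq> {} \<and>
     (\<forall>c \<in> C \<inter> l. is_cell_centre c \<or> is_cell_corner c) \<and>
     (\<forall>c1 \<in> C \<inter> l. \<forall>c2 \<in> C \<inter> l. c1 \<noteq> c2 \<longrightarrow>
        \<not> (\<exists>c \<in> C \<inter> l. strictly_between c1 c2 c) \<longrightarrow>
        (is_cell_centre c1 \<and> is_cell_corner c2) \<or> (is_cell_corner c1 \<and> is_cell_centre c2))"

definition only_centres_on :: "complex set \<Rightarrow> complex set \<Rightarrow> bool" where
  "only_centres_on C l \<longleftrightarrow> C \<inter> l \<noteq> {} \<and> (\<forall>c \<in> C \<inter> l. is_cell_centre c)"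

definition only_corners_on :: "complex set \<Rightarrow> complex set \<Rightarrow> bool" where
  "only_corners_on C l \<longleftrightarrow> C \<inter> l \<noteq> {} \<and> (\<forall>c \<in> C \<inter> l. is_cell_corner c)"

text \<open>l1 and l2 are distinct adjacent members of the family M of lines parallel to d
(offset of a point z transverse to d is Im (cnj d * z)).\<close>
definition adjacent_parallel :: "complex set set \<Rightarrow> complex \<Rightarrow> complex set \<Rightarrow> complex set \<Rightarrow> bool" where
  "adjacent_parallel M d l1 l2 \<longleftrightarrow>
     l1 \<in> M \<and> l2 \<in> M \<and> parallel_to l1 d \<and> parallel_to l2 d \<and> l1 \<noteq> l2 \<and>
     \<not> (\<exists>l3 \<in> M. parallel_to l3 d \<and>
          (\<exists>z1 \<in> l1. \<exists>z2 \<in> l2. \<exists>z3 \<in> l3.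
             min (Im (cnj d * z1)) (Im (cnj d * z2)) < Im (cnj d * z3) \<and>
             Im (cnj d * z3) < max (Im (cnj d * z1)) (Im (cnj d * z2))))"

definition species26 :: "(int \<Rightarrow> int \<Rightarrow> bool) \<Rightarrow> bool" where
  "species26 dark \<longleftrightarrow>
     type_pmm (G1 dark) \<and>
     (\<forall>g \<in> G1 dark. is_mirror g \<longrightarrow>
        (\<exists>a. \<exists>d \<in> {1 + \<i>, 1 - \<i>}. {z. g z = z} = line_dir a d)) \<and>
     (\<forall>g \<in> G1 dark. is_mirror g \<longrightarrow> is_symmetry dark g True \<and> g \<notin> H1 dark) \<and>
     type_p2 (H1 dark) \<and>
     (\<exists>c \<in> half_turn_centres (H1 dark). is_cell_centre c) \<and>
     (\<exists>c \<in> half_turn_centres (H1 dark). is_cell_corner c)"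

definition species26o :: "(int \<Rightarrow> int \<Rightarrow> bool) \<Rightarrow> bool" where
  "species26o dark \<longleftrightarrow> species26 dark \<and>
     (\<forall>l \<in> mirror_lines (G1 dark). alternating_on (half_turn_centres (G1 dark)) l)"

definition species26e :: "(int \<Rightarrow> int \<Rightarrow> bool) \<Rightarrow> bool" where
  "species26e dark \<longleftrightarrow> species26 dark \<and>
     (let M = mirror_lines (G1 dark); C = half_turn_centres (G1 dark) in
      \<exists>d d'. {d, d'} = {1 + \<i>, 1 - \<i>} \<and> d \<noteq> d' \<and>
        (\<forall>l \<in> M. parallel_to l d \<longrightarrow> only_centres_on C l \<or> only_corners_on C l) \<and>
        (\<forall>l1 l2. adjacent_parallel M d l1 l2 \<longrightarrow>
            (only_centres_on C l1 \<longleftrightarrow> only_corners_on C l2)) \<and>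
        (\<forall>l \<in> M. parallel_to l d' \<longrightarrow> alternating_on C l))"

definition satin :: "nat \<Rightarrow> nat \<Rightarrow> int \<Rightarrow> int \<Rightarrow> bool" where
  "satin n s x y \<longleftrightarrow> [x = y * int s] (mod int n)"

definition is_satin :: "nat \<Rightarrow> nat \<Rightarrow> bool" where
  "is_satin n s \<longleftrightarrow> 1 < s \<and> s + 1 < n \<and> coprime n s"

definition isonemal_satin :: "nat \<Rightarrow> nat \<Rightarrow> bool" where
  "isonemal_satin n s \<longleftrightarrow> is_satin n s \<and>
     ([int s ^ 2 = 1] (mod int n) \<or> [int s ^ 2 = -1] (mod int n))"

definition square_satin :: "nat \<Rightarrow> nat \<Rightarrow> bool" where
  "square_satin n s \<longleftrightarrow> is_satin n s \<and> [int s ^ 2 = -1] (mod int n)"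

definition rectangular_satin :: "nat \<Rightarrow> nat \<Rightarrow> bool" where
  "rectangular_satin n s \<longleftrightarrow> isonemal_satin n s \<and> \<not> square_satin n s \<and>
     even n \<and> [int s ^ 2 = 1] (mod 2 * int n)"

end

theory Submission imports Defs "HOL-Analysis.Analysis" begin

lemma m_gcd:
  fixes m u v :: nat
  assumes "m dvd u * v" "coprime u v"
  shows "m = gcd m u * gcd m v"
proof (rule dvd_antisym)
  have c: "coprime (gcd m u) (gcd m v)"
    by (rule coprime_divisors[OF gcd_dvd2 gcd_dvd2 assms(2)])
  show "gcd m u * gcd m v dvd m"
    using c by (simp add: divides_mult)
  have "m dvd gcd (m * v) (u * v)" using assms(1) by simp
  also have "gcd (m * v) (u * v) = gcd m u * v" by (simp add: gcd_mult_distrib_nat mult.commute)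
  finally have 1: "m dvd gcd m u * v" .
  have "m dvd gcd (gcd m u * m) (gcd m u * v)" using 1 by simp
  also have "\<dots> = gcd m u * gcd m v" by (simp add: gcd_mult_distrib_nat)
  finally show "m dvd gcd m u * gcd m v" .
qed

lemma exPQ:
  fixes n s :: nat
  assumes r: "rectangular_satin n s"
  shows "\<exists>P Q::int. P > 0 \<and> Q > 0 \<and> 2*P*Q = int n \<and> (2*P) dvd (int s + 1) \<and> (2*Q) dvd (int s - 1)"
proof -
  from r have sat: "1 < s" "s+1 < n" "coprime n s" "even n" and c2: "[int s ^ 2 = 1] (mod 2 * int n)"
    unfolding rectangular_satin_def isonemal_satin_def is_satin_def by auto
  have "odd s"
  proof
    assume "even s"
    then have "is_unit (2::nat)" using sat coprime_common_divisor[of n s 2] by auto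
    then show False by simp
  qed
  then obtain u where su: "s = 2*u+1" using oddE by blast
  obtain m where nm: "n = 2*m" using sat by blast
  have u0: "u > 0" using sat su by simp
  have "2 * int n dvd int s^2 - 1" using c2 cong_iff_dvd_diff by blast
  also have "int s^2 - 1 = 4 * (int u * (int u + 1))" using su by (simp add: power2_eq_square algebra_simps)
  finally have "4 * int m dvd 4 * (int u * (int u + 1))" using nm by simp
  then have "int m dvd int u * (int u + 1)" by (rule zdvd_mult_cancel) (simp)
  then have "int m dvd int (u * (u+1))" by (simp add: algebra_simps)
  then have md: "m dvd u * (u+1)" by (simp only: int_dvd_int_iff)
  have "coprime u (u+1)" by simp
  then have mg: "m = gcd m u * gcd m (u+1)" using m_gcd md by blast
  define P where "P = int (gcd m (u+1))"
  define Q where "Q = int (gcd m u)"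
  have "P > 0" unfolding P_def by simp
  moreover have "Q > 0" unfolding Q_def using u0 by simp
  moreover have "2*P*Q = int n"
  proof -
    have "int n = 2 * (int (gcd m u) * int (gcd m (u+1)))" using mg nm by (metis of_nat_mult of_nat_numeral)
    then show ?thesis by (simp add: P_def Q_def algebra_simps)
  qed
  moreover have "(2*P) dvd (int s + 1)"
  proof -
    have "int (gcd m (u+1)) dvd int (u+1)" by (simp only: int_dvd_int_iff gcd_dvd2)
    then have "P dvd int u + 1" unfolding P_def by (simp add: add.commute)
    then have "2*P dvd 2*(int u + 1)" by (rule mult_dvd_mono[OF dvd_refl])
    then show ?thesis using su by (simp add: algebra_simps)
  qed
  moreover have "(2*Q) dvd (int s - 1)"
  proof -
    have "Q dvd int u" unfolding Q_def by (simp)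
    then have "2*Q dvd 2*(int u)" by (rule mult_dvd_mono[OF dvd_refl])
    then show ?thesis using su by (simp add: algebra_simps)
  qed
  ultimately show ?thesis by blast
qed

lemma combos:
  fixes a1 a2 b1 b2 :: real
  assumes "a1 + b1 = 1 \<or> a1 + b1 = -1" "a1 - b1 = 1 \<or> a1 - b1 = -1"
    "a2 + b2 = 1 \<or> a2 + b2 = -1" "a2 - b2 = 1 \<or> a2 - b2 = -1" "a1^2 + a2^2 = 1"
  shows "(a1=1\<and>a2=0\<and>b1=0\<and>b2=1) \<or> (a1=-1\<and>a2=0\<and>b1=0\<and>b2=-1) \<or>
         (a1=1\<and>a2=0\<and>b1=0\<and>b2=-1) \<or> (a1=-1\<and>a2=0\<and>b1=0\<and>b2=1) \<or>
         (a1=0\<and>a2=1\<and>b1=-1\<and>b2=0) \<or> (a1=0\<and>a2=-1\<and>b1=1\<and>b2=0) \<or>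
         (a1=0\<and>a2=1\<and>b1=1\<and>b2=0) \<or> (a1=0\<and>a2=-1\<and>b1=-1\<and>b2=0)"
proof -
  define A1 where "A1 = a1+b1"
  define B1 where "B1 = a1-b1"
  define A2 where "A2 = a2+b2"
  define B2 where "B2 = a2-b2"
  have e: "a1 = (A1+B1)/2" "b1 = (A1-B1)/2" "a2 = (A2+B2)/2" "b2 = (A2-B2)/2"
    unfolding A1_def B1_def A2_def B2_def by simp_all
  have h: "A1 = 1 \<or> A1 = -1" "B1 = 1 \<or> B1 = -1" "A2 = 1 \<or> A2 = -1" "B2 = 1 \<or> B2 = -1"
    using assms(1-4) unfolding A1_def B1_def A2_def B2_def by auto
  have "((A1+B1)/2)^2 + ((A2+B2)/2)^2 = 1" using assms(5) e by simp
  then show ?thesis unfolding e using h by (elim disjE) (simp_all add: power2_eq_square)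
qed

lemma mem_cell: "z \<in> cell i j \<longleftrightarrow> of_int i \<le> Re z \<and> Re z \<le> of_int i + 1 \<and> of_int j \<le> Im z \<and> Im z \<le> of_int j + 1"
  by (simp add: cell_def)

lemma cell_inj: assumes "cell i j = cell i' j'" shows "i = i' \<and> j = j'"
proof -
  have "Complex (of_int i) (of_int j) \<in> cell i' j'" using assms[symmetric] by (simp add: mem_cell[of _ i j] assms[symmetric])
  moreover have "Complex (of_int i') (of_int j') \<in> cell i j" by (simp add: mem_cell[of _ i' j'] assms)
  ultimately show ?thesis unfolding mem_cell by simp
qed

lemma image_eq_cell:
  assumes "\<And>z. z \<in> A \<Longrightarrow> g z \<in> B" "\<And>w. w \<in> B \<Longrightarrow> h w \<in> A \<and> g (h w) = w"
  shows "g ` A = B"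
  using assms by (auto intro!: image_eqI[where x="h _"])

lemma img1: "(\<lambda>z. z + Complex (of_int a) (of_int b)) ` cell i j = cell (i+a) (j+b)"
  by (rule image_eq_cell[where h="\<lambda>w. w - Complex (of_int a) (of_int b)"]) (auto simp: mem_cell)
lemma img2: "(\<lambda>z. - z + Complex (of_int a) (of_int b)) ` cell i j = cell (a-1-i) (b-1-j)"
  by (rule image_eq_cell[where h="\<lambda>w. Complex (of_int a) (of_int b) - w"]) (auto simp: mem_cell)
lemma img3: "(\<lambda>z. cnj z + Complex (of_int a) (of_int b)) ` cell i j = cell (i+a) (b-1-j)"
  by (rule image_eq_cell[where h="\<lambda>w. cnj (w - Complex (of_int a) (of_int b))"]) (auto simp: mem_cell)
lemma img4: "(\<lambda>z. - cnj z + Complex (of_int a) (of_int b)) ` cell i j = cell (a-1-i) (j+b)"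
  by (rule image_eq_cell[where h="\<lambda>w. - cnj (w - Complex (of_int a) (of_int b))"]) (auto simp: mem_cell)
lemma img5: "(\<lambda>z. \<i> * z + Complex (of_int a) (of_int b)) ` cell i j = cell (a-1-j) (b+i)"
  by (rule image_eq_cell[where h="\<lambda>w. - \<i> * (w - Complex (of_int a) (of_int b))"]) (auto simp: mem_cell)
lemma img6: "(\<lambda>z. - \<i> * z + Complex (of_int a) (of_int b)) ` cell i j = cell (a+j) (b-1-i)"
  by (rule image_eq_cell[where h="\<lambda>w. \<i> * (w - Complex (of_int a) (of_int b))"]) (auto simp: mem_cell)
lemma img7: "(\<lambda>z. \<i> * cnj z + Complex (of_int a) (of_int b)) ` cell i j = cell (a+j) (b+i)"
  by (rule image_eq_cell[where h="\<lambda>w. \<i> * cnj (w - Complex (of_int a) (of_int b))"]) (auto simp: mem_cell)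
lemma img8: "(\<lambda>z. - \<i> * cnj z + Complex (of_int a) (of_int b)) ` cell i j = cell (a-1-j) (b-1-i)"
  by (rule image_eq_cell[where h="\<lambda>w. - \<i> * cnj (w - Complex (of_int a) (of_int b))"]) (auto simp: mem_cell)

lemma iso_mult: "cmod c = 1 \<Longrightarrow> isometry (\<lambda>z. c * z + t)"
  unfolding isometry_def dist_norm by (simp add: ring_distribs[symmetric] norm_mult)
lemma iso_cnj: "cmod c = 1 \<Longrightarrow> isometry (\<lambda>z. c * cnj z + t)"
proof -
  assume c: "cmod c = 1"
  have "cmod (c * cnj z + t - (c * cnj w + t)) = cmod (z - w)" for z w
  proof -
    have "c * cnj z + t - (c * cnj w + t) = c * cnj (z - w)" by (simp add: algebra_simps)
    then show ?thesis using c by (simp add: norm_mult complex_cnj_diff[symmetric] del: complex_cnj_diff)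
  qed
  then show ?thesis unfolding isometry_def dist_norm by simp
qed

lemma iso_lin:
  assumes "isometry g"
  shows "g z = g 0 + Re z *\<^sub>R (g 1 - g 0) + Im z *\<^sub>R (g \<i> - g 0)"
proof -
  define h where "h = (\<lambda>z. g z - g 0)"
  have "h 0 = 0" by (simp add: h_def)
  moreover have "\<forall>x y. dist (h x) (h y) = dist x y" using assms unfolding isometry_def h_def dist_norm by simp
  ultimately have lin: "linear h" by (rule isometry_linear)
  have z: "z = Re z *\<^sub>R 1 + Im z *\<^sub>R \<i>" by (simp add: complex_eq_iff)
  have "h z = h (Re z *\<^sub>R 1 + Im z *\<^sub>R \<i>)" by (rule arg_cong[where f=h], rule z)
  also have "\<dots> = Re z *\<^sub>R h 1 + Im z *\<^sub>R h \<i>" by (simp add: linear_add[OF lin] linear_scale[OF lin])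
  finally have "h z = Re z *\<^sub>R h 1 + Im z *\<^sub>R h \<i>" .
  then have e: "g z - g 0 = Re z *\<^sub>R (g 1 - g 0) + Im z *\<^sub>R (g \<i> - g 0)" by (simp only: h_def)
  show ?thesis using e by (simp add: diff_eq_eq algebra_simps)
qed

lemma iso_forms:
  assumes iso: "isometry g" and cel: "g ` cell 0 0 = cell i' j'"
  shows "\<exists>a b::int. g = (\<lambda>z. z + Complex (of_int a) (of_int b)) \<or>
    g = (\<lambda>z. - z + Complex (of_int a) (of_int b)) \<or>
    g = (\<lambda>z. cnj z + Complex (of_int a) (of_int b)) \<or>
    g = (\<lambda>z. - cnj z + Complex (of_int a) (of_int b)) \<or>
    g = (\<lambda>z. \<i> * z + Complex (of_int a) (of_int b)) \<or>
    g = (\<lambda>z. - \<i> * z + Complex (of_int a) (of_int b)) \<or>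
    g = (\<lambda>z. \<i> * cnj z + Complex (of_int a) (of_int b)) \<or>
    g = (\<lambda>z. - \<i> * cnj z + Complex (of_int a) (of_int b))"
proof -
  define g0 where "g0 = g 0"
  define a1 where "a1 = Re (g 1 - g 0)"
  define a2 where "a2 = Im (g 1 - g 0)"
  define b1 where "b1 = Re (g \<i> - g 0)"
  define b2 where "b2 = Im (g \<i> - g 0)"
  have gf: "Re (g z) = Re g0 + Re z * a1 + Im z * b1" "Im (g z) = Im g0 + Re z * a2 + Im z * b2" for z
  proof -
    have e: "g z = g 0 + Re z *\<^sub>R (g 1 - g 0) + Im z *\<^sub>R (g \<i> - g 0)" by (rule iso_lin[OF iso])
    show "Re (g z) = Re g0 + Re z * a1 + Im z * b1" unfolding g0_def a1_def b1_def by (subst e) simp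
    show "Im (g z) = Im g0 + Re z * a2 + Im z * b2" unfolding g0_def a2_def b2_def by (subst e) simp
  qed
  have d: "dist (g x) (g y) = dist x y" for x y using iso unfolding isometry_def by blast
  have "cmod (g 1 - g 0) = 1" using d[of 1 0] by (simp add: dist_norm)
  then have "cmod (g 1 - g 0) ^ 2 = 1" by simp
  then have "Re (g 1 - g 0)^2 + Im (g 1 - g 0)^2 = 1" by (simp only: cmod_power2)
  then have na: "a1^2 + a2^2 = 1" unfolding a1_def a2_def .
  have "cmod (g \<i> - g 0) = 1" using d[of \<i> 0] by (simp add: dist_norm)
  then have "cmod (g \<i> - g 0) ^ 2 = 1" by simp
  then have "Re (g \<i> - g 0)^2 + Im (g \<i> - g 0)^2 = 1" by (simp only: cmod_power2)
  then have nb: "b1^2 + b2^2 = 1" unfolding b1_def b2_def .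
  have "cmod (g 1 - g \<i>) = cmod (1 - \<i>)" using d[of 1 \<i>] by (simp add: dist_norm)
  moreover have "cmod (1 - \<i>) ^ 2 = 2" by (simp only: cmod_power2) simp
  ultimately have "cmod (g 1 - g \<i>) ^ 2 = 2" by simp
  then have "Re (g 1 - g \<i>)^2 + Im (g 1 - g \<i>)^2 = 2" by (simp only: cmod_power2)
  moreover have "Re (g 1 - g \<i>) = a1 - b1" "Im (g 1 - g \<i>) = a2 - b2"
    unfolding a1_def a2_def b1_def b2_def by simp_all
  ultimately have nab: "(a1-b1)^2 + (a2-b2)^2 = 2" by simp
  have inc: "g z \<in> cell i' j'" if "z \<in> cell 0 0" for z using cel that by blast
  have c0: "of_int i' \<le> Re g0" "Re g0 \<le> of_int i' + 1" "of_int j' \<le> Im g0" "Im g0 \<le> of_int j' + 1"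
    using inc[of 0] gf[of 0] by (simp_all add: mem_cell)
  have c1: "of_int i' \<le> Re g0 + a1" "Re g0 + a1 \<le> of_int i' + 1" "of_int j' \<le> Im g0 + a2" "Im g0 + a2 \<le> of_int j' + 1"
    using inc[of 1] gf[of 1] by (simp_all add: mem_cell)
  have c2: "of_int i' \<le> Re g0 + b1" "Re g0 + b1 \<le> of_int i' + 1" "of_int j' \<le> Im g0 + b2" "Im g0 + b2 \<le> of_int j' + 1"
    using inc[of \<i>] gf[of \<i>] by (simp_all add: mem_cell)
  have c3: "of_int i' \<le> Re g0 + a1 + b1" "Re g0 + a1 + b1 \<le> of_int i' + 1" "of_int j' \<le> Im g0 + a2 + b2" "Im g0 + a2 + b2 \<le> of_int j' + 1"
    using inc[of "1+\<i>"] gf[of "1+\<i>"] by (simp_all add: mem_cell)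
  have "Complex (of_int i') (of_int j') \<in> g ` cell 0 0" using cel by (simp add: mem_cell)
  then obtain w where w: "w \<in> cell 0 0" "Complex (of_int i') (of_int j') = g w" by blast
  have wr: "of_int i' = Re g0 + Re w * a1 + Im w * b1" "of_int j' = Im g0 + Re w * a2 + Im w * b2"
    using arg_cong[OF w(2), of Re] arg_cong[OF w(2), of Im] gf[of w] by simp_all
  have wb: "0 \<le> Re w" "Re w \<le> 1" "0 \<le> Im w" "Im w \<le> 1" using w(1) by (simp_all add: mem_cell)
  have "(a1-b1)^2 \<le> 1" "(a2-b2)^2 \<le> 1" using c1 c2 by (simp_all add: abs_square_le_1)
  then have "(a1-b1)^2 = 1" "(a2-b2)^2 = 1" using nab by linarith+
  then have B: "a1 - b1 = 1 \<or> a1 - b1 = -1" "a2 - b2 = 1 \<or> a2 - b2 = -1" by (simp_all add: power2_eq_1_iff)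
  have idt: "(a1+b1)^2 + (a2+b2)^2 = 2*(a1^2+a2^2) + 2*(b1^2+b2^2) - ((a1-b1)^2 + (a2-b2)^2)"
    by (simp add: power2_eq_square algebra_simps)
  have "(a1+b1)^2 \<le> 1" "(a2+b2)^2 \<le> 1" using c0 c3 by (simp_all add: abs_square_le_1)
  moreover have "(a1+b1)^2 + (a2+b2)^2 = 2" using idt na nb nab by simp
  ultimately have "(a1+b1)^2 = 1" "(a2+b2)^2 = 1" by linarith+
  then have A: "a1 + b1 = 1 \<or> a1 + b1 = -1" "a2 + b2 = 1 \<or> a2 + b2 = -1" by (simp_all add: power2_eq_1_iff)
  have comb: "(a1=1 \<and> a2=0 \<and> b1=0 \<and> b2=1) \<or> (a1=-1 \<and> a2=0 \<and> b1=0 \<and> b2=-1) \<or> (a1=1 \<and> a2=0 \<and> b1=0 \<and> b2=-1) \<or> (a1=-1 \<and> a2=0 \<and> b1=0 \<and> b2=1) \<or> (a1=0 \<and> a2=1 \<and> b1=-1 \<and> b2=0) \<or> (a1=0 \<and> a2=-1 \<and> b1=1 \<and> b2=0) \<or> (a1=0 \<and> a2=1 \<and> b1=1 \<and> b2=0) \<or> (a1=0 \<and> a2=-1 \<and> b1=-1 \<and> b2=0)"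
    by (rule combos[OF A(1) B(1) A(2) B(2) na])
  have re: "Re g0 = of_int i' - min 0 a1 - min 0 b1" "Im g0 = of_int j' - min 0 a2 - min 0 b2"
    using comb c0 c1 c2 c3 wr wb by (elim disjE; simp; linarith)+
  have mm: "min 0 a1 + min 0 b1 = 0 \<or> min 0 a1 + min 0 b1 = -1" "min 0 a2 + min 0 b2 = 0 \<or> min 0 a2 + min 0 b2 = -1"
    using comb by (elim disjE; simp)+
  have "\<exists>a::int. Re g0 = of_int a"
  proof (cases "min 0 a1 + min 0 b1 = 0")
    case True then show ?thesis using re(1) by (intro exI[of _ "i'"]) linarith
  next
    case False then have "min 0 a1 + min 0 b1 = -1" using mm(1) by blast
    then have "Re g0 = of_int i' + 1" using re(1) by linarith
    then show ?thesis by (intro exI[of _ "i'+1"]) simp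
  qed
  then obtain a where ra: "Re g0 = of_int a" by blast
  have "\<exists>b::int. Im g0 = of_int b"
  proof (cases "min 0 a2 + min 0 b2 = 0")
    case True then show ?thesis using re(2) by (intro exI[of _ "j'"]) linarith
  next
    case False then have "min 0 a2 + min 0 b2 = -1" using mm(2) by blast
    then have "Im g0 = of_int j' + 1" using re(2) by linarith
    then show ?thesis by (intro exI[of _ "j'+1"]) simp
  qed
  then obtain b where rb: "Im g0 = of_int b" by blast
  have gf': "Re (g z) = of_int a + Re z * a1 + Im z * b1" "Im (g z) = of_int b + Re z * a2 + Im z * b2" for z
    using gf ra rb by simp_all
  from comb have "g = (\<lambda>z. z + Complex (of_int a) (of_int b)) \<or>
    g = (\<lambda>z. - z + Complex (of_int a) (of_int b)) \<or>
    g = (\<lambda>z. cnj z + Complex (of_int a) (of_int b)) \<or>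
    g = (\<lambda>z. - cnj z + Complex (of_int a) (of_int b)) \<or>
    g = (\<lambda>z. \<i> * z + Complex (of_int a) (of_int b)) \<or>
    g = (\<lambda>z. - \<i> * z + Complex (of_int a) (of_int b)) \<or>
    g = (\<lambda>z. \<i> * cnj z + Complex (of_int a) (of_int b)) \<or>
    g = (\<lambda>z. - \<i> * cnj z + Complex (of_int a) (of_int b))"
  proof (elim disjE conjE)
    assume "a1 = 1" "a2 = 0" "b1 = 0" "b2 = 1"
    then have "g = (\<lambda>z. z + Complex (of_int a) (of_int b))" by (intro ext) (simp add: gf' complex_eq_iff)
    then show ?thesis by simp
  next
    assume "a1 = -1" "a2 = 0" "b1 = 0" "b2 = -1"
    then have "g = (\<lambda>z. - z + Complex (of_int a) (of_int b))" by (intro ext) (simp add: gf' complex_eq_iff)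
    then show ?thesis by simp
  next
    assume "a1 = 1" "a2 = 0" "b1 = 0" "b2 = -1"
    then have "g = (\<lambda>z. cnj z + Complex (of_int a) (of_int b))" by (intro ext) (simp add: gf' complex_eq_iff)
    then show ?thesis by simp
  next
    assume "a1 = -1" "a2 = 0" "b1 = 0" "b2 = 1"
    then have "g = (\<lambda>z. - cnj z + Complex (of_int a) (of_int b))" by (intro ext) (simp add: gf' complex_eq_iff)
    then show ?thesis by simp
  next
    assume "a1 = 0" "a2 = 1" "b1 = -1" "b2 = 0"
    then have "g = (\<lambda>z. \<i> * z + Complex (of_int a) (of_int b))" by (intro ext) (simp add: gf' complex_eq_iff)
    then show ?thesis by simp
  next
    assume "a1 = 0" "a2 = -1" "b1 = 1" "b2 = 0"
    then have "g = (\<lambda>z. - \<i> * z + Complex (of_int a) (of_int b))" by (intro ext) (simp add: gf' complex_eq_iff)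
    then show ?thesis by simp
  next
    assume "a1 = 0" "a2 = 1" "b1 = 1" "b2 = 0"
    then have "g = (\<lambda>z. \<i> * cnj z + Complex (of_int a) (of_int b))" by (intro ext) (simp add: gf' complex_eq_iff)
    then show ?thesis by simp
  next
    assume "a1 = 0" "a2 = -1" "b1 = -1" "b2 = 0"
    then have "g = (\<lambda>z. - \<i> * cnj z + Complex (of_int a) (of_int b))" by (intro ext) (simp add: gf' complex_eq_iff)
    then show ?thesis by simp
  qed
  then show ?thesis by (intro exI[of _ a] exI[of _ b])
qed

lemma sym_map:
  assumes "is_symmetry dk g flip" "\<And>i j. g ` cell i j = cell (fi i j) (fj i j)"
  shows "dk (fi i j) (fj i j) \<longleftrightarrow> (dk i j \<noteq> (swaps_strands g \<noteq> flip))"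
proof -
  from assms(1) obtain i' j' where "g ` cell i j = cell i' j'" "dk i' j' \<longleftrightarrow> (dk i j \<noteq> (swaps_strands g \<noteq> flip))"
    unfolding is_symmetry_def by blast
  moreover have "i' = fi i j" "j' = fj i j" using cell_inj[of "fi i j" "fj i j" i' j'] assms(2) calculation(1) by auto
  ultimately show ?thesis by simp
qed

lemma sym_intro:
  assumes "isometry g" "\<And>i j. g ` cell i j = cell (fi i j) (fj i j)"
    "\<And>i j. dk (fi i j) (fj i j) \<longleftrightarrow> (dk i j \<noteq> (swaps_strands g \<noteq> flip))"
  shows "is_symmetry dk g flip"
  unfolding is_symmetry_def using assms by blast

lemma dvd_shift_add: "(N::int) dvd c \<Longrightarrow> x = c + y \<Longrightarrow> (N dvd x \<longleftrightarrow> N dvd y)"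
  by (simp add: dvd_add_right_iff)
lemma dvd_shift_diff: assumes d: "(N::int) dvd c" and x: "x = c - y" shows "N dvd x \<longleftrightarrow> N dvd y"
proof
  assume "N dvd x" then have "N dvd c - x" using d by (intro dvd_diff)
  moreover have "c - x = y" using x by simp
  ultimately show "N dvd y" by simp
next
  assume "N dvd y" then have "N dvd c - y" using d by (intro dvd_diff)
  then show "N dvd x" using x by simp
qed

locale rsat =
  fixes n s :: nat and P Q :: int
  assumes n4: "4 \<le> n" and cop: "coprime n s" and s2: "int n dvd int s ^ 2 - 1"
    and Ppos: "P > 0" and Qpos: "Q > 0" and PQ: "2*P*Q = int n"
    and Pd: "(2*P) dvd (int s + 1)" and Qd: "(2*Q) dvd (int s - 1)"
begin

abbreviation dk where "dk \<equiv> satin n s"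

lemma dk_iff: "dk x y \<longleftrightarrow> int n dvd x - y * int s"
  by (simp add: satin_def cong_iff_dvd_diff)

lemma nd1: "\<not> int n dvd 1"
proof
  assume "int n dvd 1" then have "int n \<le> 1" by (simp add: zdvd_imp_le)
  then show False using n4 by simp
qed

lemma nd2: "\<not> int n dvd 2"
proof
  assume "int n dvd 2" then have "int n \<le> 2" using zdvd_imp_le[of "int n" 2] by simp
  then show False using n4 by simp
qed

lemma nds: "\<not> int n dvd int s"
proof
  assume "int n dvd int s"
  moreover have "coprime (int n) (int s)" using cop by simp
  ultimately have "is_unit (int n)" using coprime_common_divisor[of "int n" "int s" "int n"] by simp
  then show False using n4 by simp
qed

lemma nd2s: "\<not> int n dvd 2 * int s"
proof
  assume a: "int n dvd 2 * int s"
  have "coprime (int n) (int s)" using cop by simp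
  then have "int n dvd 2" using a by (simp add: coprime_dvd_mult_left_iff)
  then show False using nd2 by simp
qed

lemma noadj_h: "dk i j \<Longrightarrow> dk i' j \<Longrightarrow> i' = i + 1 \<or> i = i' + 1 \<Longrightarrow> False"
proof -
  assume a: "dk i j" "dk i' j" "i' = i + 1 \<or> i = i' + 1"
  have "int n dvd (i' - j * int s) - (i - j * int s)" using dvd_diff[OF a(2)[unfolded dk_iff] a(1)[unfolded dk_iff]] .
  moreover have "(i' - j * int s) - (i - j * int s) = 1 \<or> (i' - j * int s) - (i - j * int s) = -1" using a(3) by auto
  ultimately show False using nd1 by auto
qed

lemma noadj_v: "dk i j \<Longrightarrow> dk i j' \<Longrightarrow> j' = j + 1 \<or> j = j' + 1 \<Longrightarrow> False"
proof -
  assume a: "dk i j" "dk i j'" "j' = j + 1 \<or> j = j' + 1"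
  have "int n dvd (i - j * int s) - (i - j' * int s)" using dvd_diff[OF a(1)[unfolded dk_iff] a(2)[unfolded dk_iff]] .
  moreover have "(i - j * int s) - (i - j' * int s) = int s \<or> (i - j * int s) - (i - j' * int s) = - int s"
    using a(3) by (auto simp: algebra_simps)
  ultimately show False using nds by auto
qed

lemma dk00: "dk 0 0" by (simp add: dk_iff)
lemma dks1: "dk (int s) 1" by (simp add: dk_iff)
lemma ndk10: "\<not> dk 1 0" using nd1 by (simp add: dk_iff)
lemma ndk20: "\<not> dk 2 0" using nd2 by (simp add: dk_iff)

lemma dk_swap: "dk x y \<Longrightarrow> dk y x"
proof -
  assume "dk x y"
  then have a: "int n dvd x - y * int s" by (simp add: dk_iff)
  have "y - x * int s = (- int s) * (x - y * int s) - y * (int s ^ 2 - 1)"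
    by (simp add: algebra_simps power2_eq_square)
  moreover have "int n dvd (- int s) * (x - y * int s) - y * (int s ^ 2 - 1)"
    using a s2 by (simp add: dvd_diff)
  ultimately show "dk y x" by (simp add: dk_iff)
qed

lemma L_iff: "int n dvd a - b * int s \<longleftrightarrow> (\<exists>m k. a = m*P + k*Q \<and> b = m*P - k*Q)"
proof
  assume a: "int n dvd a - b * int s"
  have nP: "int n = (2*P)*Q" using PQ by simp
  have nQ: "int n = (2*Q)*P" using PQ by (simp add: algebra_simps)
  have "2*P dvd int n" unfolding nP by (rule dvd_triv_left)
  then have "2*P dvd a - b * int s" using a by (rule dvd_trans)
  moreover have "2*P dvd b * (int s + 1)" using Pd by simp
  ultimately have "2*P dvd (a - b * int s) + b * (int s + 1)" by (rule dvd_add)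
  moreover have "(a - b * int s) + b * (int s + 1) = a + b" by (simp add: algebra_simps)
  ultimately have "2*P dvd a + b" by simp
  then obtain m where m: "a + b = 2*P*m" by (rule dvdE)
  have "2*Q dvd int n" unfolding nQ by (rule dvd_triv_left)
  then have "2*Q dvd a - b * int s" using a by (rule dvd_trans)
  moreover have "2*Q dvd b * (int s - 1)" using Qd by simp
  ultimately have "2*Q dvd (a - b * int s) + b * (int s - 1)" by (rule dvd_add)
  moreover have "(a - b * int s) + b * (int s - 1) = a - b" by (simp add: algebra_simps)
  ultimately have "2*Q dvd a - b" by simp
  then obtain k where k: "a - b = 2*Q*k" by (rule dvdE)
  have "a = m*P + k*Q" "b = m*P - k*Q" using m k by (simp_all add: algebra_simps)
  then show "\<exists>m k. a = m*P + k*Q \<and> b = m*P - k*Q" by blast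
next
  assume "\<exists>m k. a = m*P + k*Q \<and> b = m*P - k*Q"
  then obtain m k where mk: "a = m*P + k*Q" "b = m*P - k*Q" by blast
  have e: "a - b * int s = m * (P * (1 - int s)) + k * (Q * (1 + int s))" unfolding mk by (simp add: algebra_simps)
  obtain uu where uu: "int s - 1 = 2*Q*uu" using Qd by (rule dvdE)
  obtain vv where vv: "int s + 1 = 2*P * vv" using Pd by (rule dvdE)
  have "P * (1 - int s) = - (P * (int s - 1))" by (simp add: algebra_simps)
  also have "\<dots> = - ((2*P*Q) * uu)" unfolding uu by (simp add: algebra_simps)
  finally have 1: "P * (1 - int s) = - (int n * uu)" unfolding PQ .
  have "Q * (1 + int s) = Q * (int s + 1)" by (simp add: algebra_simps)
  also have "\<dots> = (2*P*Q) * vv" unfolding vv by (simp add: algebra_simps)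
  finally have 2: "Q * (1 + int s) = int n * vv" unfolding PQ .
  have "a - b * int s = int n * (k * vv - m * uu)" using e unfolding 1 2 by (simp add: algebra_simps)
  then show "int n dvd a - b * int s" by simp
qed

definition "lat m k = Complex (of_int (m*P + k*Q)) (of_int (m*P - k*Q))"
definition "lat1 m k = Complex (of_int (1 + m*P + k*Q)) (of_int (1 + m*P - k*Q))"
definition "T m k = (\<lambda>z. z + lat m k)"
definition "R m k = (\<lambda>z. - z + lat1 m k)"
definition "D1 m k = (\<lambda>z. \<i> * cnj z + lat m k)"
definition "D2 m k = (\<lambda>z. - \<i> * cnj z + lat1 m k)"

definition "good g flip \<longleftrightarrow> ((\<exists>m k. g = T m k) \<or> (\<exists>m k. g = R m k)) \<and> \<not> flip \<or>
   ((\<exists>m k. g = D1 m k) \<or> (\<exists>m k. g = D2 m k)) \<and> flip"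

lemma c1:
  assumes "is_symmetry dk (\<lambda>z. z + Complex (of_int a) (of_int b)) flip"
  shows "good (\<lambda>z. z + Complex (of_int a) (of_int b)) flip"
proof -
  have e: "dk (i + a) (j + b) \<longleftrightarrow> (dk i j \<noteq> flip)" for i j
    using sym_map[OF assms img1, where i=i and j=j] by (simp add: swaps_strands_def)
  have nf: "\<not> flip"
  proof (rule ccontr)
    assume f: "\<not> (\<not> flip)"
    have 1: "dk ((1) + a) ((0) + b)" using e[where i=1 and j=0] f ndk10 by simp
    have 2: "dk ((2) + a) ((0) + b)" using e[where i=2 and j=0] f ndk20 by simp
    show False by (rule noadj_h[OF 1 2]) simp
  qed
  have d0: "dk ((0) + a) ((0) + b)" using e[where i=0 and j=0] nf dk00 by simp
  have d1: "dk ((int s) + a) ((1) + b)" using e[where i="int s" and j=1] nf dks1 by simp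
  then obtain m k where mk: "a = m*P+k*Q" "b = m*P-k*Q" using d0 L_iff dk_iff by auto
  then have "(\<lambda>z. z + Complex (of_int a) (of_int b)) = T m k" by (simp add: T_def lat_def)
  then show ?thesis using nf unfolding good_def by blast
qed

lemma c2:
  assumes "is_symmetry dk (\<lambda>z. - z + Complex (of_int a) (of_int b)) flip"
  shows "good (\<lambda>z. - z + Complex (of_int a) (of_int b)) flip"
proof -
  have e: "dk (a - 1 - i) (b - 1 - j) \<longleftrightarrow> (dk i j \<noteq> flip)" for i j
    using sym_map[OF assms img2, where i=i and j=j] by (simp add: swaps_strands_def)
  have nf: "\<not> flip"
  proof (rule ccontr)
    assume f: "\<not> (\<not> flip)"
    have 1: "dk (a - 1 - (1)) (b - 1 - (0))" using e[where i=1 and j=0] f ndk10 by simp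
    have 2: "dk (a - 1 - (2)) (b - 1 - (0))" using e[where i=2 and j=0] f ndk20 by simp
    show False by (rule noadj_h[OF 1 2]) simp
  qed
  have d0: "dk (a - 1 - (0)) (b - 1 - (0))" using e[where i=0 and j=0] nf dk00 by simp
  have d1: "dk (a - 1 - (int s)) (b - 1 - (1))" using e[where i="int s" and j=1] nf dks1 by simp
  have "int n dvd (a - 1) - (b - 1) * int s" using d0 dk_iff by simp
  then obtain m k where mk: "a - 1 = m*P+k*Q" "b - 1 = m*P-k*Q" using L_iff by blast
  then have "a = 1 + m*P+k*Q" "b = 1 + m*P-k*Q" by simp_all
  then have "(\<lambda>z. - z + Complex (of_int a) (of_int b)) = R m k" by (simp add: R_def lat1_def)
  then show ?thesis using nf unfolding good_def by blast
qed

lemma c3: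
  assumes "is_symmetry dk (\<lambda>z. cnj z + Complex (of_int a) (of_int b)) flip"
  shows "good (\<lambda>z. cnj z + Complex (of_int a) (of_int b)) flip"
proof -
  have e: "dk (i + a) (b - 1 - j) \<longleftrightarrow> (dk i j \<noteq> flip)" for i j
    using sym_map[OF assms img3, where i=i and j=j] by (simp add: swaps_strands_def)
  have nf: "\<not> flip"
  proof (rule ccontr)
    assume f: "\<not> (\<not> flip)"
    have 1: "dk ((1) + a) (b - 1 - (0))" using e[where i=1 and j=0] f ndk10 by simp
    have 2: "dk ((2) + a) (b - 1 - (0))" using e[where i=2 and j=0] f ndk20 by simp
    show False by (rule noadj_h[OF 1 2]) simp
  qed
  have d0: "dk ((0) + a) (b - 1 - (0))" using e[where i=0 and j=0] nf dk00 by simp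
  have d1: "dk ((int s) + a) (b - 1 - (1))" using e[where i="int s" and j=1] nf dks1 by simp
  have h: "int n dvd (((int s) + a) - (b - 1 - (1)) * int s) - (((0) + a) - (b - 1 - (0)) * int s)" using dvd_diff[OF d1[unfolded dk_iff] d0[unfolded dk_iff]] .
  have eq: "(((int s) + a) - (b - 1 - (1)) * int s) - (((0) + a) - (b - 1 - (0)) * int s) = 2 * int s" by (simp add: algebra_simps)
  have "int n dvd 2 * int s" using h unfolding eq .
  then show ?thesis using nd2s by simp
qed

lemma c4:
  assumes "is_symmetry dk (\<lambda>z. - cnj z + Complex (of_int a) (of_int b)) flip"
  shows "good (\<lambda>z. - cnj z + Complex (of_int a) (of_int b)) flip"
proof -
  have e: "dk (a - 1 - i) (j + b) \<longleftrightarrow> (dk i j \<noteq> flip)" for i j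
    using sym_map[OF assms img4, where i=i and j=j] by (simp add: swaps_strands_def)
  have nf: "\<not> flip"
  proof (rule ccontr)
    assume f: "\<not> (\<not> flip)"
    have 1: "dk (a - 1 - (1)) ((0) + b)" using e[where i=1 and j=0] f ndk10 by simp
    have 2: "dk (a - 1 - (2)) ((0) + b)" using e[where i=2 and j=0] f ndk20 by simp
    show False by (rule noadj_h[OF 1 2]) simp
  qed
  have d0: "dk (a - 1 - (0)) ((0) + b)" using e[where i=0 and j=0] nf dk00 by simp
  have d1: "dk (a - 1 - (int s)) ((1) + b)" using e[where i="int s" and j=1] nf dks1 by simp
  have h: "int n dvd ((a - 1 - (int s)) - ((1) + b) * int s) - ((a - 1 - (0)) - ((0) + b) * int s)" using dvd_diff[OF d1[unfolded dk_iff] d0[unfolded dk_iff]] .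
  have eq: "((a - 1 - (int s)) - ((1) + b) * int s) - ((a - 1 - (0)) - ((0) + b) * int s) = - (2 * int s)" by (simp add: algebra_simps)
  have "int n dvd - (2 * int s)" using h unfolding eq .
  then show ?thesis using nd2s by simp
qed

lemma c5:
  assumes "is_symmetry dk (\<lambda>z. \<i> * z + Complex (of_int a) (of_int b)) flip"
  shows "good (\<lambda>z. \<i> * z + Complex (of_int a) (of_int b)) flip"
proof -
  have e: "dk (a - 1 - j) (b + i) \<longleftrightarrow> (dk i j \<noteq> (\<not> flip))" for i j
    using sym_map[OF assms img5, where i=i and j=j] by (simp add: swaps_strands_def)
  have nf: "flip"
  proof (rule ccontr)
    assume f: "\<not> (flip)"
    have 1: "dk (a - 1 - (0)) (b + (1))" using e[where i=1 and j=0] f ndk10 by simp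
    have 2: "dk (a - 1 - (0)) (b + (2))" using e[where i=2 and j=0] f ndk20 by simp
    show False by (rule noadj_v[OF 1 2]) simp
  qed
  have d0: "dk (a - 1 - (0)) (b + (0))" using e[where i=0 and j=0] nf dk00 by simp
  have d1: "dk (a - 1 - (1)) (b + (int s))" using e[where i="int s" and j=1] nf dks1 by simp
  have h: "int n dvd (((a - 1 - (1)) - (b + (int s)) * int s) - ((a - 1 - (0)) - (b + (0)) * int s)) + (int s ^ 2 - 1)" using dvd_add[OF dvd_diff[OF d1[unfolded dk_iff] d0[unfolded dk_iff]] s2] .
  have eq: "(((a - 1 - (1)) - (b + (int s)) * int s) - ((a - 1 - (0)) - (b + (0)) * int s)) + (int s ^ 2 - 1) = - 2" by (simp add: algebra_simps power2_eq_square)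
  have "int n dvd - 2" using h unfolding eq .
  then show ?thesis using nd2 by simp
qed

lemma c6:
  assumes "is_symmetry dk (\<lambda>z. - \<i> * z + Complex (of_int a) (of_int b)) flip"
  shows "good (\<lambda>z. - \<i> * z + Complex (of_int a) (of_int b)) flip"
proof -
  have e: "dk (a + j) (b - 1 - i) \<longleftrightarrow> (dk i j \<noteq> (\<not> flip))" for i j
    using sym_map[OF assms img6, where i=i and j=j] by (simp add: swaps_strands_def)
  have nf: "flip"
  proof (rule ccontr)
    assume f: "\<not> (flip)"
    have 1: "dk (a + (0)) (b - 1 - (1))" using e[where i=1 and j=0] f ndk10 by simp
    have 2: "dk (a + (0)) (b - 1 - (2))" using e[where i=2 and j=0] f ndk20 by simp
    show False by (rule noadj_v[OF 1 2]) simp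
  qed
  have d0: "dk (a + (0)) (b - 1 - (0))" using e[where i=0 and j=0] nf dk00 by simp
  have d1: "dk (a + (1)) (b - 1 - (int s))" using e[where i="int s" and j=1] nf dks1 by simp
  have h: "int n dvd (((a + (1)) - (b - 1 - (int s)) * int s) - ((a + (0)) - (b - 1 - (0)) * int s)) - (int s ^ 2 - 1)" using dvd_diff[OF dvd_diff[OF d1[unfolded dk_iff] d0[unfolded dk_iff]] s2] .
  have eq: "(((a + (1)) - (b - 1 - (int s)) * int s) - ((a + (0)) - (b - 1 - (0)) * int s)) - (int s ^ 2 - 1) = 2" by (simp add: algebra_simps power2_eq_square)
  have "int n dvd 2" using h unfolding eq .
  then show ?thesis using nd2 by simp
qed

lemma c7:
  assumes "is_symmetry dk (\<lambda>z. \<i> * cnj z + Complex (of_int a) (of_int b)) flip"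
  shows "good (\<lambda>z. \<i> * cnj z + Complex (of_int a) (of_int b)) flip"
proof -
  have e: "dk (a + j) (b + i) \<longleftrightarrow> (dk i j \<noteq> (\<not> flip))" for i j
    using sym_map[OF assms img7, where i=i and j=j] by (simp add: swaps_strands_def)
  have nf: "flip"
  proof (rule ccontr)
    assume f: "\<not> (flip)"
    have 1: "dk (a + (0)) (b + (1))" using e[where i=1 and j=0] f ndk10 by simp
    have 2: "dk (a + (0)) (b + (2))" using e[where i=2 and j=0] f ndk20 by simp
    show False by (rule noadj_v[OF 1 2]) simp
  qed
  have d0: "dk (a + (0)) (b + (0))" using e[where i=0 and j=0] nf dk00 by simp
  have d1: "dk (a + (1)) (b + (int s))" using e[where i="int s" and j=1] nf dks1 by simp
  then obtain m k where mk: "a = m*P+k*Q" "b = m*P-k*Q" using d0 L_iff dk_iff by auto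
  then have "(\<lambda>z. \<i> * cnj z + Complex (of_int a) (of_int b)) = D1 m k" by (simp add: D1_def lat_def)
  then show ?thesis using nf unfolding good_def by blast
qed

lemma c8:
  assumes "is_symmetry dk (\<lambda>z. - \<i> * cnj z + Complex (of_int a) (of_int b)) flip"
  shows "good (\<lambda>z. - \<i> * cnj z + Complex (of_int a) (of_int b)) flip"
proof -
  have e: "dk (a - 1 - j) (b - 1 - i) \<longleftrightarrow> (dk i j \<noteq> (\<not> flip))" for i j
    using sym_map[OF assms img8, where i=i and j=j] by (simp add: swaps_strands_def)
  have nf: "flip"
  proof (rule ccontr)
    assume f: "\<not> (flip)"
    have 1: "dk (a - 1 - (0)) (b - 1 - (1))" using e[where i=1 and j=0] f ndk10 by simp
    have 2: "dk (a - 1 - (0)) (b - 1 - (2))" using e[where i=2 and j=0] f ndk20 by simp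
    show False by (rule noadj_v[OF 1 2]) simp
  qed
  have d0: "dk (a - 1 - (0)) (b - 1 - (0))" using e[where i=0 and j=0] nf dk00 by simp
  have d1: "dk (a - 1 - (1)) (b - 1 - (int s))" using e[where i="int s" and j=1] nf dks1 by simp
  have "int n dvd (a - 1) - (b - 1) * int s" using d0 dk_iff by simp
  then obtain m k where mk: "a - 1 = m*P+k*Q" "b - 1 = m*P-k*Q" using L_iff by blast
  then have "a = 1 + m*P+k*Q" "b = 1 + m*P-k*Q" by simp_all
  then have "(\<lambda>z. - \<i> * cnj z + Complex (of_int a) (of_int b)) = D2 m k" by (simp add: D2_def lat1_def)
  then show ?thesis using nf unfolding good_def by blast
qed

lemma sym_dest: assumes "is_symmetry dk g flip" shows "good g flip"
proof -
  have iso: "isometry g" using assms unfolding is_symmetry_def by blast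
  obtain i0 j0 where c: "g ` cell 0 0 = cell i0 j0" using assms unfolding is_symmetry_def by blast
  from iso_forms[OF iso c] show ?thesis
  proof (elim exE disjE)
    fix a b assume g: "g = (\<lambda>z. z + Complex (of_int a) (of_int b))"
    show ?thesis using c1[OF assms[unfolded g]] unfolding g .
  next
    fix a b assume g: "g = (\<lambda>z. - z + Complex (of_int a) (of_int b))"
    show ?thesis using c2[OF assms[unfolded g]] unfolding g .
  next
    fix a b assume g: "g = (\<lambda>z. cnj z + Complex (of_int a) (of_int b))"
    show ?thesis using c3[OF assms[unfolded g]] unfolding g .
  next
    fix a b assume g: "g = (\<lambda>z. - cnj z + Complex (of_int a) (of_int b))"
    show ?thesis using c4[OF assms[unfolded g]] unfolding g .
  next
    fix a b assume g: "g = (\<lambda>z. \<i> * z + Complex (of_int a) (of_int b))"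
    show ?thesis using c5[OF assms[unfolded g]] unfolding g .
  next
    fix a b assume g: "g = (\<lambda>z. - \<i> * z + Complex (of_int a) (of_int b))"
    show ?thesis using c6[OF assms[unfolded g]] unfolding g .
  next
    fix a b assume g: "g = (\<lambda>z. \<i> * cnj z + Complex (of_int a) (of_int b))"
    show ?thesis using c7[OF assms[unfolded g]] unfolding g .
  next
    fix a b assume g: "g = (\<lambda>z. - \<i> * cnj z + Complex (of_int a) (of_int b))"
    show ?thesis using c8[OF assms[unfolded g]] unfolding g .
  qed
qed

lemma sym_T: "is_symmetry dk (T m k) False"
proof -
  have g: "T m k = (\<lambda>z. z + Complex (of_int (m*P+k*Q)) (of_int (m*P-k*Q)))" by (simp add: T_def lat_def)
  have c: "int n dvd (m*P+k*Q) - (m*P-k*Q) * int s" using L_iff by blast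
  show ?thesis unfolding g
  proof (rule sym_intro[where fi="\<lambda>i j. i + (m*P+k*Q)" and fj="\<lambda>i j. j + (m*P-k*Q)"], goal_cases)
    case 1 show ?case unfolding isometry_def dist_norm by simp
  next
    case (2 i j) show ?case by (rule img1)
  next
    case (3 i j)
    have eq: "(i + (m*P+k*Q)) - (j + (m*P-k*Q)) * int s = ((m*P+k*Q) - (m*P-k*Q) * int s) + (i - j * int s)" by (simp add: algebra_simps)
    have "dk (i + (m*P+k*Q)) (j + (m*P-k*Q)) \<longleftrightarrow> dk i j" unfolding dk_iff by (rule dvd_shift_add[OF c eq])
    then show ?case by (simp add: swaps_strands_def)
  qed
qed

lemma sym_R: "is_symmetry dk (R m k) False"
proof -
  have g: "R m k = (\<lambda>z. - z + Complex (of_int (1 + m*P + k*Q)) (of_int (1 + m*P - k*Q)))" by (simp add: R_def lat1_def)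
  have c: "int n dvd (m*P+k*Q) - (m*P-k*Q) * int s" using L_iff by blast
  show ?thesis unfolding g
  proof (rule sym_intro[where fi="\<lambda>i j. (1 + m*P + k*Q) - 1 - i" and fj="\<lambda>i j. (1 + m*P - k*Q) - 1 - j"], goal_cases)
    case 1 show ?case unfolding isometry_def dist_norm by (simp add: norm_minus_commute)
  next
    case (2 i j) show ?case by (rule img2)
  next
    case (3 i j)
    have eq: "((1 + m*P + k*Q) - 1 - i) - ((1 + m*P - k*Q) - 1 - j) * int s = ((m*P+k*Q) - (m*P-k*Q) * int s) - (i - j * int s)" by (simp add: algebra_simps)
    have "dk ((1 + m*P + k*Q) - 1 - i) ((1 + m*P - k*Q) - 1 - j) \<longleftrightarrow> dk i j" unfolding dk_iff by (rule dvd_shift_diff[OF c eq])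
    then show ?case by (simp add: swaps_strands_def)
  qed
qed

lemma sym_D1: "is_symmetry dk (D1 m k) True"
proof -
  have g: "D1 m k = (\<lambda>z. \<i> * cnj z + Complex (of_int (m*P+k*Q)) (of_int (m*P-k*Q)))" by (simp add: D1_def lat_def)
  have c: "int n dvd (m*P+k*Q) - (m*P-k*Q) * int s" using L_iff by blast
  show ?thesis unfolding g
  proof (rule sym_intro[where fi="\<lambda>i j. (m*P+k*Q) + j" and fj="\<lambda>i j. (m*P-k*Q) + i"], goal_cases)
    case 1 show ?case by (rule iso_cnj) simp
  next
    case (2 i j) show ?case by (rule img7)
  next
    case (3 i j)
    have eq: "((m*P+k*Q) + j) - ((m*P-k*Q) + i) * int s = ((m*P+k*Q) - (m*P-k*Q) * int s) + (j - i * int s)" by (simp add: algebra_simps)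
    have "dk ((m*P+k*Q) + j) ((m*P-k*Q) + i) \<longleftrightarrow> dk j i" unfolding dk_iff by (rule dvd_shift_add[OF c eq])
    also have "\<dots> \<longleftrightarrow> dk i j" using dk_swap by blast
    finally show ?case by (simp add: swaps_strands_def)
  qed
qed

lemma sym_D2: "is_symmetry dk (D2 m k) True"
proof -
  have g: "D2 m k = (\<lambda>z. - \<i> * cnj z + Complex (of_int (1 + m*P + k*Q)) (of_int (1 + m*P - k*Q)))" by (simp add: D2_def lat1_def)
  have c: "int n dvd (m*P+k*Q) - (m*P-k*Q) * int s" using L_iff by blast
  show ?thesis unfolding g
  proof (rule sym_intro[where fi="\<lambda>i j. (1 + m*P + k*Q) - 1 - j" and fj="\<lambda>i j. (1 + m*P - k*Q) - 1 - i"], goal_cases)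
    case 1 show ?case by (rule iso_cnj) simp
  next
    case (2 i j) show ?case by (rule img8)
  next
    case (3 i j)
    have eq: "((1 + m*P + k*Q) - 1 - j) - ((1 + m*P - k*Q) - 1 - i) * int s = ((m*P+k*Q) - (m*P-k*Q) * int s) - (j - i * int s)" by (simp add: algebra_simps)
    have "dk ((1 + m*P + k*Q) - 1 - j) ((1 + m*P - k*Q) - 1 - i) \<longleftrightarrow> dk j i" unfolding dk_iff by (rule dvd_shift_diff[OF c eq])
    also have "\<dots> \<longleftrightarrow> dk i j" using dk_swap by blast
    finally show ?case by (simp add: swaps_strands_def)
  qed
qed

lemma sw_T: "swaps_strands (T m k) = False" by (simp add: swaps_strands_def T_def)
lemma sw_R: "swaps_strands (R m k) = False" by (simp add: swaps_strands_def R_def)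
lemma sw_D1: "swaps_strands (D1 m k) = True" by (simp add: swaps_strands_def D1_def)
lemma sw_D2: "swaps_strands (D2 m k) = True" by (simp add: swaps_strands_def D2_def)

lemma G1_iff: "g \<in> G1 dk \<longleftrightarrow> (\<exists>m k. g = T m k) \<or> (\<exists>m k. g = R m k) \<or> (\<exists>m k. g = D1 m k) \<or> (\<exists>m k. g = D2 m k)"
proof
  assume "g \<in> G1 dk"
  then obtain flip where "is_symmetry dk g flip" unfolding G1_def by blast
  then have "good g flip" by (rule sym_dest)
  then show "(\<exists>m k. g = T m k) \<or> (\<exists>m k. g = R m k) \<or> (\<exists>m k. g = D1 m k) \<or> (\<exists>m k. g = D2 m k)"
    unfolding good_def by blast
next
  assume "(\<exists>m k. g = T m k) \<or> (\<exists>m k. g = R m k) \<or> (\<exists>m k. g = D1 m k) \<or> (\<exists>m k. g = D2 m k)"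
  then show "g \<in> G1 dk" unfolding G1_def using sym_T sym_R sym_D1 sym_D2 by blast
qed

lemma H1_iff: "g \<in> H1 dk \<longleftrightarrow> (\<exists>m k. g = T m k) \<or> (\<exists>m k. g = R m k)"
proof
  assume "g \<in> H1 dk"
  then have "good g False" unfolding H1_def by (simp add: sym_dest)
  then show "(\<exists>m k. g = T m k) \<or> (\<exists>m k. g = R m k)" unfolding good_def by blast
next
  assume "(\<exists>m k. g = T m k) \<or> (\<exists>m k. g = R m k)"
  then show "g \<in> H1 dk" unfolding H1_def using sym_T sym_R by blast
qed

lemma flip_sw: assumes "is_symmetry dk g flip" shows "flip = swaps_strands g"
proof -
  have "good g flip" using assms by (rule sym_dest)
  then show ?thesis unfolding good_def using sw_T sw_R sw_D1 sw_D2 by auto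
qed

definition "phi w = Complex (1/2 + Re w * of_int P + Im w * of_int Q) (1/2 + Re w * of_int P - Im w * of_int Q)"
definition "psi z = Complex ((Re z + Im z - 1) / (2 * of_int P)) ((Re z - Im z) / (2 * of_int Q))"

lemma P0: "real_of_int P \<noteq> 0" using Ppos by simp
lemma Q0: "real_of_int Q \<noteq> 0" using Qpos by simp

lemma phi_psi: "phi (psi z) = z"
  using P0 Q0 by (simp add: phi_def psi_def complex_eq_iff field_simps)
lemma psi_phi: "psi (phi z) = z"
  using P0 Q0 by (simp add: phi_def psi_def complex_eq_iff field_simps)

lemma aff: "real_affine phi"
  unfolding real_affine_def
  by (rule exI[of _ "Complex ((of_int P - of_int Q)/2) ((of_int P - of_int Q)/2)"],
      rule exI[of _ "Complex ((of_int P + of_int Q)/2) ((of_int P + of_int Q)/2)"],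
      rule exI[of _ "Complex (1/2) (1/2)"])
     (simp add: phi_def complex_eq_iff field_simps)

lemma cT: "(\<lambda>s. phi \<circ> s \<circ> psi) (\<lambda>z. z + (of_int m + of_int k * \<i>)) = T m k"
  using P0 Q0 by (intro ext) (simp add: phi_def psi_def T_def lat_def complex_eq_iff field_simps)
lemma cR: "(\<lambda>s. phi \<circ> s \<circ> psi) (\<lambda>z. - z + (of_int m + of_int k * \<i>)) = R m k"
  using P0 Q0 by (intro ext) (simp add: phi_def psi_def R_def lat1_def complex_eq_iff field_simps)
lemma cD1: "(\<lambda>s. phi \<circ> s \<circ> psi) (\<lambda>z. cnj z + (of_int m + of_int k * \<i>)) = D1 m k"
  using P0 Q0 by (intro ext) (simp add: phi_def psi_def D1_def lat_def complex_eq_iff field_simps)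
lemma cD2: "(\<lambda>s. phi \<circ> s \<circ> psi) (\<lambda>z. - cnj z + (of_int m + of_int k * \<i>)) = D2 m k"
  using P0 Q0 by (intro ext) (simp add: phi_def psi_def D2_def lat1_def complex_eq_iff field_simps)

end

lemma pmm_intro: "p \<in> {(\<lambda>w. w), (\<lambda>w. - w), (\<lambda>w. cnj w), (\<lambda>w. - cnj w)} \<Longrightarrow> t \<in> gauss_ints \<Longrightarrow> (\<lambda>z. p z + t) \<in> pmm_std"
  unfolding pmm_std_def by (rule CollectI, rule exI[of _ p], rule exI[of _ t]) simp
lemma p2_intro: "p \<in> {(\<lambda>w. w), (\<lambda>w. - w)} \<Longrightarrow> t \<in> gauss_ints \<Longrightarrow> (\<lambda>z. p z + t) \<in> p2_std"
  unfolding p2_std_def by (rule CollectI, rule exI[of _ p], rule exI[of _ t]) simp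
lemma gauss_intro: "of_int m + of_int k * \<i> \<in> gauss_ints" unfolding gauss_ints_def by blast

lemma pmm_dest:
  assumes "f \<in> pmm_std"
  obtains m k where "f = (\<lambda>z. z + (of_int m + of_int k * \<i>)) \<or> f = (\<lambda>z. - z + (of_int m + of_int k * \<i>))
    \<or> f = (\<lambda>z. cnj z + (of_int m + of_int k * \<i>)) \<or> f = (\<lambda>z. - cnj z + (of_int m + of_int k * \<i>))"
proof -
  obtain p t where f: "f = (\<lambda>z. p z + t)" and p: "p \<in> {(\<lambda>w. w), (\<lambda>w. - w), (\<lambda>w. cnj w), (\<lambda>w. - cnj w)}"
    and t: "t \<in> gauss_ints"
  proof -
    have "\<exists>p t. f = (\<lambda>z. p z + t) \<and> p \<in> {(\<lambda>w. w), (\<lambda>w. - w), (\<lambda>w. cnj w), (\<lambda>w. - cnj w)} \<and> t \<in> gauss_ints"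
      using assms unfolding pmm_std_def by (simp only: mem_Collect_eq)
    then show ?thesis by (elim exE conjE) (rule that)
  qed
  from t obtain m k where t': "t = of_int m + of_int k * \<i>" unfolding gauss_ints_def by blast
  from p have "p = (\<lambda>w. w) \<or> p = (\<lambda>w. - w) \<or> p = (\<lambda>w. cnj w) \<or> p = (\<lambda>w. - cnj w)" by blast
  then have "f = (\<lambda>z. z + (of_int m + of_int k * \<i>)) \<or> f = (\<lambda>z. - z + (of_int m + of_int k * \<i>))
    \<or> f = (\<lambda>z. cnj z + (of_int m + of_int k * \<i>)) \<or> f = (\<lambda>z. - cnj z + (of_int m + of_int k * \<i>))"
    unfolding f t' by (elim disjE) simp_all
  then show ?thesis by (rule that)
qed

lemma p2_dest:
  assumes "f \<in> p2_std"
  obtains m k where "f = (\<lambda>z. z + (of_int m + of_int k * \<i>)) \<or> f = (\<lambda>z. - z + (of_int m + of_int k * \<i>))"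
proof -
  obtain p t where f: "f = (\<lambda>z. p z + t)" and p: "p \<in> {(\<lambda>w. w), (\<lambda>w. - w)}"
    and t: "t \<in> gauss_ints"
  proof -
    have "\<exists>p t. f = (\<lambda>z. p z + t) \<and> p \<in> {(\<lambda>w. w), (\<lambda>w. - w)} \<and> t \<in> gauss_ints"
      using assms unfolding p2_std_def by (simp only: mem_Collect_eq)
    then show ?thesis by (elim exE conjE) (rule that)
  qed
  from t obtain m k where t': "t = of_int m + of_int k * \<i>" unfolding gauss_ints_def by blast
  from p have "p = (\<lambda>w. w) \<or> p = (\<lambda>w. - w)" by blast
  then have "f = (\<lambda>z. z + (of_int m + of_int k * \<i>)) \<or> f = (\<lambda>z. - z + (of_int m + of_int k * \<i>))"
    unfolding f t' by (elim disjE) simp_all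
  then show ?thesis by (rule that)
qed

context rsat begin

lemma G1_eq: "G1 dk = (\<lambda>s. phi \<circ> s \<circ> psi) ` pmm_std"
proof
  show "G1 dk \<subseteq> (\<lambda>s. phi \<circ> s \<circ> psi) ` pmm_std"
  proof
    fix g assume "g \<in> G1 dk"
    then have "(\<exists>m k. g = T m k) \<or> (\<exists>m k. g = R m k) \<or> (\<exists>m k. g = D1 m k) \<or> (\<exists>m k. g = D2 m k)"
      by (simp only: G1_iff)
    then show "g \<in> (\<lambda>s. phi \<circ> s \<circ> psi) ` pmm_std"
    proof (elim disjE exE)
      fix m k assume a: "g = T m k"
      have "(\<lambda>z. z + (of_int m + of_int k * \<i>)) \<in> pmm_std" using pmm_intro[of "\<lambda>w. w", OF _ gauss_intro] by simp
      then show ?thesis unfolding a cT[of m k, symmetric] by (rule imageI)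
    next
      fix m k assume a: "g = R m k"
      have "(\<lambda>z. - z + (of_int m + of_int k * \<i>)) \<in> pmm_std" using pmm_intro[of "\<lambda>w. - w", OF _ gauss_intro] by simp
      then show ?thesis unfolding a cR[of m k, symmetric] by (rule imageI)
    next
      fix m k assume a: "g = D1 m k"
      have "(\<lambda>z. cnj z + (of_int m + of_int k * \<i>)) \<in> pmm_std" using pmm_intro[of "\<lambda>w. cnj w", OF _ gauss_intro] by simp
      then show ?thesis unfolding a cD1[of m k, symmetric] by (rule imageI)
    next
      fix m k assume a: "g = D2 m k"
      have "(\<lambda>z. - cnj z + (of_int m + of_int k * \<i>)) \<in> pmm_std" using pmm_intro[of "\<lambda>w. - cnj w", OF _ gauss_intro] by simp
      then show ?thesis unfolding a cD2[of m k, symmetric] by (rule imageI)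
    qed
  qed
next
  show "(\<lambda>s. phi \<circ> s \<circ> psi) ` pmm_std \<subseteq> G1 dk"
  proof
    fix g assume "g \<in> (\<lambda>s. phi \<circ> s \<circ> psi) ` pmm_std"
    then obtain f where f: "f \<in> pmm_std" "g = phi \<circ> f \<circ> psi" by blast
    from f(1) obtain m k where "f = (\<lambda>z. z + (of_int m + of_int k * \<i>)) \<or> f = (\<lambda>z. - z + (of_int m + of_int k * \<i>))
    \<or> f = (\<lambda>z. cnj z + (of_int m + of_int k * \<i>)) \<or> f = (\<lambda>z. - cnj z + (of_int m + of_int k * \<i>))"
      by (rule pmm_dest)
    then have "g = T m k \<or> g = R m k \<or> g = D1 m k \<or> g = D2 m k"
    proof (elim disjE)
      assume "f = (\<lambda>z. z + (of_int m + of_int k * \<i>))"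
      then have "g = T m k" unfolding f(2) cT[of m k, symmetric] by (simp only:)
      then show ?thesis by (rule disjI1)
    next
      assume "f = (\<lambda>z. - z + (of_int m + of_int k * \<i>))"
      then have "g = R m k" unfolding f(2) cR[of m k, symmetric] by (simp only:)
      then show ?thesis by (intro disjI2 disjI1)
    next
      assume "f = (\<lambda>z. cnj z + (of_int m + of_int k * \<i>))"
      then have "g = D1 m k" unfolding f(2) cD1[of m k, symmetric] by (simp only:)
      then show ?thesis by (intro disjI2 disjI1)
    next
      assume "f = (\<lambda>z. - cnj z + (of_int m + of_int k * \<i>))"
      then have "g = D2 m k" unfolding f(2) cD2[of m k, symmetric] by (simp only:)
      then show ?thesis by (intro disjI2)
    qed
    then show "g \<in> G1 dk" unfolding G1_iff by blast
  qed
qed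

lemma H1_eq: "H1 dk = (\<lambda>s. phi \<circ> s \<circ> psi) ` p2_std"
proof
  show "H1 dk \<subseteq> (\<lambda>s. phi \<circ> s \<circ> psi) ` p2_std"
  proof
    fix g assume "g \<in> H1 dk"
    then have "(\<exists>m k. g = T m k) \<or> (\<exists>m k. g = R m k)" by (simp only: H1_iff)
    then show "g \<in> (\<lambda>s. phi \<circ> s \<circ> psi) ` p2_std"
    proof (elim disjE exE)
      fix m k assume a: "g = T m k"
      have "(\<lambda>z. z + (of_int m + of_int k * \<i>)) \<in> p2_std" using p2_intro[of "\<lambda>w. w", OF _ gauss_intro] by simp
      then show ?thesis unfolding a cT[of m k, symmetric] by (rule imageI)
    next
      fix m k assume a: "g = R m k"
      have "(\<lambda>z. - z + (of_int m + of_int k * \<i>)) \<in> p2_std" using p2_intro[of "\<lambda>w. - w", OF _ gauss_intro] by simp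
      then show ?thesis unfolding a cR[of m k, symmetric] by (rule imageI)
    qed
  qed
next
  show "(\<lambda>s. phi \<circ> s \<circ> psi) ` p2_std \<subseteq> H1 dk"
  proof
    fix g assume "g \<in> (\<lambda>s. phi \<circ> s \<circ> psi) ` p2_std"
    then obtain f where f: "f \<in> p2_std" "g = phi \<circ> f \<circ> psi" by blast
    from f(1) obtain m k where "f = (\<lambda>z. z + (of_int m + of_int k * \<i>)) \<or> f = (\<lambda>z. - z + (of_int m + of_int k * \<i>))"
      by (rule p2_dest)
    then have "g = T m k \<or> g = R m k"
    proof (elim disjE)
      assume "f = (\<lambda>z. z + (of_int m + of_int k * \<i>))"
      then have "g = T m k" unfolding f(2) cT[of m k, symmetric] by (simp only:)
      then show ?thesis by (rule disjI1)
    next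
      assume "f = (\<lambda>z. - z + (of_int m + of_int k * \<i>))"
      then have "g = R m k" unfolding f(2) cR[of m k, symmetric] by (simp only:)
      then show ?thesis by (rule disjI2)
    qed
    then show "g \<in> H1 dk" unfolding H1_iff by blast
  qed
qed

lemma type_pmm_G1: "type_pmm (G1 dk)"
  unfolding type_pmm_def same_type_def using aff psi_phi phi_psi G1_eq by (intro exI[of _ phi] exI[of _ psi]) simp

lemma type_p2_H1: "type_p2 (H1 dk)"
  unfolding type_p2_def same_type_def using aff psi_phi phi_psi H1_eq by (intro exI[of _ phi] exI[of _ psi]) simp

end


lemma line11: "z \<in> line_dir a (1 + \<i>) \<longleftrightarrow> Re z - Im z = Re a - Im a"
proof
  assume "z \<in> line_dir a (1 + \<i>)"
  then obtain x where "z = a + of_real x * (1 + \<i>)" unfolding line_dir_def by blast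
  then show "Re z - Im z = Re a - Im a" by simp
next
  assume h: "Re z - Im z = Re a - Im a"
  have "z = a + of_real (Im z - Im a) * (1 + \<i>)" using h by (simp add: complex_eq_iff)
  then show "z \<in> line_dir a (1 + \<i>)" unfolding line_dir_def by blast
qed

lemma line1m: "z \<in> line_dir a (1 - \<i>) \<longleftrightarrow> Re z + Im z = Re a + Im a"
proof
  assume "z \<in> line_dir a (1 - \<i>)"
  then obtain x where "z = a + of_real x * (1 - \<i>)" unfolding line_dir_def by blast
  then show "Re z + Im z = Re a + Im a" by simp
next
  assume h: "Re z + Im z = Re a + Im a"
  have "z = a + of_real (Im a - Im z) * (1 - \<i>)" using h by (simp add: complex_eq_iff)
  then show "z \<in> line_dir a (1 - \<i>)" unfolding line_dir_def by blast
qed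

lemma centre_gen:
  assumes "even (A - B)"
  shows "is_cell_centre (Complex ((1 + of_int A)/2) ((1 + of_int B)/2)) \<longleftrightarrow> even A"
proof
  assume "is_cell_centre (Complex ((1 + of_int A)/2) ((1 + of_int B)/2))"
  then obtain i j :: int where e: "Complex ((1 + of_int A)/2) ((1 + of_int B)/2) = Complex (of_int i + 1/2) (of_int j + 1/2)"
    unfolding is_cell_centre_def by blast
  then have "(1 + real_of_int A)/2 = of_int i + 1/2" by simp
  then have "real_of_int A = real_of_int (2*i)" by simp
  then have "A = 2*i" by (simp only: of_int_eq_iff)
  then show "even A" by simp
next
  assume a: "even A"
  then have b: "even B" using assms by simp
  obtain x where x: "A = 2*x" using a by (rule evenE)
  obtain y where y: "B = 2*y" using b by (rule evenE)
  have "Complex ((1 + of_int A)/2) ((1 + of_int B)/2) = Complex (of_int x + 1/2) (of_int y + 1/2)"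
    unfolding x y by (simp add: field_simps)
  then show "is_cell_centre (Complex ((1 + of_int A)/2) ((1 + of_int B)/2))" unfolding is_cell_centre_def by blast
qed

lemma corner_gen:
  assumes "even (A - B)"
  shows "is_cell_corner (Complex ((1 + of_int A)/2) ((1 + of_int B)/2)) \<longleftrightarrow> odd A"
proof
  assume "is_cell_corner (Complex ((1 + of_int A)/2) ((1 + of_int B)/2))"
  then obtain i j :: int where e: "Complex ((1 + of_int A)/2) ((1 + of_int B)/2) = Complex (of_int i) (of_int j)"
    unfolding is_cell_corner_def by blast
  then have "(1 + real_of_int A)/2 = of_int i" by simp
  then have "real_of_int (A + 1) = real_of_int (2*i)" by simp
  then have "A + 1 = 2*i" by (simp only: of_int_eq_iff)
  then show "odd A" by presburger
next
  assume a: "odd A"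
  then have b: "odd B" using assms by simp
  obtain x where x: "A = 2*x + 1" using a by (rule oddE)
  obtain y where y: "B = 2*y + 1" using b by (rule oddE)
  have "Complex ((1 + of_int A)/2) ((1 + of_int B)/2) = Complex (of_int (x+1)) (of_int (y+1))"
    unfolding x y by (simp add: field_simps)
  then show "is_cell_corner (Complex ((1 + of_int A)/2) ((1 + of_int B)/2))" unfolding is_cell_corner_def by blast
qed

lemma alt_gen:
  fixes f :: "int \<Rightarrow> complex" and E :: "int \<Rightarrow> bool"
  assumes CL: "C \<inter> l = range f" and fw: "\<And>m. f m = b + of_int m * w"
    and cen: "\<And>m. is_cell_centre (f m) \<longleftrightarrow> E m" and cor: "\<And>m. is_cell_corner (f m) \<longleftrightarrow> \<not> E m"
    and flE: "\<And>m. E (m+1) \<longleftrightarrow> \<not> E m"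
  shows "alternating_on C l"
  unfolding alternating_on_def
proof (intro conjI ballI impI)
  show "C \<inter> l \<noteq> {}" using CL by auto
next
  fix c assume "c \<in> C \<inter> l"
  then obtain m where "c = f m" using CL by auto
  then show "is_cell_centre c \<or> is_cell_corner c" using cen cor by auto
next
  fix c1 c2 assume c1: "c1 \<in> C \<inter> l" and c2: "c2 \<in> C \<inter> l" and ne: "c1 \<noteq> c2"
    and nb: "\<not> (\<exists>c\<in>C \<inter> l. strictly_between c1 c2 c)"
  obtain m1 where m1: "c1 = f m1" using c1 CL by auto
  obtain m2 where m2: "c2 = f m2" using c2 CL by auto
  have adj: "m2 = m1 + 1 \<or> m1 = m2 + 1"
  proof (rule ccontr)
    assume na: "\<not> (m2 = m1 + 1 \<or> m1 = m2 + 1)"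
    have "m1 \<noteq> m2" using ne m1 m2 by auto
    then have cs: "m2 \<ge> m1 + 2 \<or> m2 \<le> m1 - 2" using na by auto
    obtain m3 u where u: "0 < u" "u < 1" and m3: "real_of_int m3 = of_int m1 + u * (of_int m2 - of_int m1)"
    proof (cases "m2 \<ge> m1 + 2")
      case True
      then have p: "real_of_int m2 - of_int m1 \<ge> 2" by linarith
      show ?thesis
      proof (rule that[of "1 / (of_int m2 - of_int m1)" "m1 + 1"])
        show "0 < 1 / (real_of_int m2 - of_int m1)" using p by simp
        show "1 / (real_of_int m2 - of_int m1) < 1" using p by simp
        show "real_of_int (m1 + 1) = of_int m1 + 1 / (of_int m2 - of_int m1) * (of_int m2 - of_int m1)" using p by simp
      qed
    next
      case False
      then have p: "real_of_int m1 - of_int m2 \<ge> 2" using cs by linarith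
      show ?thesis
      proof (rule that[of "1 / (of_int m1 - of_int m2)" "m1 - 1"])
        show "0 < 1 / (real_of_int m1 - of_int m2)" using p by simp
        show "1 / (real_of_int m1 - of_int m2) < 1" using p by simp
        have "1 / (real_of_int m1 - of_int m2) * (of_int m2 - of_int m1) = -1" using p by (simp add: field_simps)
        then show "real_of_int (m1 - 1) = of_int m1 + 1 / (of_int m1 - of_int m2) * (of_int m2 - of_int m1)" by simp
      qed
    qed
    have m3c: "(of_int m3 :: complex) = of_int m1 + of_real u * (of_int m2 - of_int m1)"
      using arg_cong[OF m3, of "of_real :: real \<Rightarrow> complex"] by simp
    have "f m3 = f m1 + of_real u * (f m2 - f m1)" unfolding fw m3c by (simp add: algebra_simps)
    then have "strictly_between c1 c2 (f m3)" unfolding strictly_between_def m1 m2 using u by blast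
    moreover have "f m3 \<in> C \<inter> l" using CL by auto
    ultimately show False using nb by blast
  qed
  show "(is_cell_centre c1 \<and> is_cell_corner c2) \<or> (is_cell_corner c1 \<and> is_cell_centre c2)"
    using adj unfolding m1 m2 cen cor using flE[of m1] flE[of m2] by auto
qed

lemma btw:
  fixes \<alpha> \<beta> :: real
  assumes "a < c" "c < b" "\<beta> \<noteq> 0"
  shows "min (\<alpha> + \<beta> * of_int a) (\<alpha> + \<beta> * of_int b) < \<alpha> + \<beta> * of_int c \<and>
         \<alpha> + \<beta> * of_int c < max (\<alpha> + \<beta> * of_int a) (\<alpha> + \<beta> * of_int b)"
proof -
  have ac: "real_of_int a < of_int c" and cb: "real_of_int c < of_int b" using assms by simp_all
  show ?thesis
  proof (cases "\<beta> > 0")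
    case True
    then have "\<beta> * of_int a < \<beta> * of_int c" "\<beta> * of_int c < \<beta> * of_int b"
      using ac cb by (simp_all add: mult_strict_left_mono)
    then show ?thesis by (simp add: min_def max_def)
  next
    case False
    then have "\<beta> < 0" using assms(3) by simp
    then have "\<beta> * of_int c < \<beta> * of_int a" "\<beta> * of_int b < \<beta> * of_int c"
      using ac cb by (simp_all add: mult_strict_left_mono_neg)
    then show ?thesis by (simp add: min_def max_def)
  qed
qed

lemma adj_gen:
  assumes par: "\<And>l. l \<in> M \<Longrightarrow> parallel_to l d \<Longrightarrow> \<exists>k. l = Lk k"
    and inM: "\<And>k. Lk k \<in> M" and parL: "\<And>k. parallel_to (Lk k) d"
    and pick: "\<And>k. pk k \<in> Lk k"
    and coord: "\<And>k z. z \<in> Lk k \<Longrightarrow> Im (cnj d * z) = \<alpha> + \<beta> * of_int k" and b0: "\<beta> \<noteq> 0"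
    and adj: "adjacent_parallel M d l1 l2"
  shows "\<exists>k. l1 = Lk k \<and> (l2 = Lk (k+1) \<or> l2 = Lk (k - 1))"
proof -
  from adj have l1: "l1 \<in> M" "parallel_to l1 d" and l2: "l2 \<in> M" "parallel_to l2 d" and ne: "l1 \<noteq> l2"
    and nex: "\<not> (\<exists>l3 \<in> M. parallel_to l3 d \<and>
          (\<exists>z1 \<in> l1. \<exists>z2 \<in> l2. \<exists>z3 \<in> l3.
             min (Im (cnj d * z1)) (Im (cnj d * z2)) < Im (cnj d * z3) \<and>
             Im (cnj d * z3) < max (Im (cnj d * z1)) (Im (cnj d * z2))))"
    unfolding adjacent_parallel_def by blast+
  obtain k1 where k1: "l1 = Lk k1" using par l1 by blast
  obtain k2 where k2: "l2 = Lk k2" using par l2 by blast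
  have "k2 = k1 + 1 \<or> k2 = k1 - 1"
  proof (rule ccontr)
    assume na: "\<not> (k2 = k1 + 1 \<or> k2 = k1 - 1)"
    have "k1 \<noteq> k2" using ne k1 k2 by auto
    then have cs: "k2 \<ge> k1 + 2 \<or> k2 \<le> k1 - 2" using na by auto
    let ?x = "\<lambda>k. \<alpha> + \<beta> * of_int k"
    have ex: "\<exists>k3. min (?x k1) (?x k2) < ?x k3 \<and> ?x k3 < max (?x k1) (?x k2)"
    proof (cases "k2 \<ge> k1 + 2")
      case True
      then have "k1 < k1 + 1" "k1 + 1 < k2" by auto
      from btw[OF this b0, of \<alpha>] show ?thesis by blast
    next
      case False
      then have "k2 < k1 - 1" "k1 - 1 < k1" using cs by auto
      from btw[OF this b0, of \<alpha>] show ?thesis by (metis min.commute max.commute)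
    qed
    then obtain k3 where k3: "min (?x k1) (?x k2) < ?x k3 \<and> ?x k3 < max (?x k1) (?x k2)" by blast
    have "Im (cnj d * pk k1) = ?x k1" "Im (cnj d * pk k2) = ?x k2" "Im (cnj d * pk k3) = ?x k3"
      using coord pick by blast+
    then have "Lk k3 \<in> M \<and> parallel_to (Lk k3) d \<and> (\<exists>z1 \<in> l1. \<exists>z2 \<in> l2. \<exists>z3 \<in> Lk k3.
             min (Im (cnj d * z1)) (Im (cnj d * z2)) < Im (cnj d * z3) \<and>
             Im (cnj d * z3) < max (Im (cnj d * z1)) (Im (cnj d * z2)))"
      using inM parL pick k3 unfolding k1 k2 by metis
    then show False using nex by blast
  qed
  then show ?thesis using k1 k2 by blast
qed


context rsat begin

definition "L1 k = line_dir (of_int (k*Q)) (1 + \<i>)"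
definition "L2 m = line_dir (of_int (1 + m*P)) (1 - \<i>)"
definition "pt m k = Complex ((1 + of_int (m*P + k*Q))/2) ((1 + of_int (m*P - k*Q))/2)"

lemma fixD1: "{z. D1 0 k z = z} = L1 k"
  by (auto simp: D1_def lat_def L1_def line11 complex_eq_iff)

lemma fixD2: "{z. D2 m 0 z = z} = L2 m"
  by (auto simp: D2_def lat1_def L2_def line1m complex_eq_iff)

lemma sw_id: "swaps_strands id = False" by (simp add: swaps_strands_def)

lemma mirror_D1: "is_mirror (D1 0 k)"
proof -
  have "isometry (D1 0 k)" using sym_D1[of 0 k] unfolding is_symmetry_def by blast
  moreover have "D1 0 k \<noteq> id" using sw_D1[of 0 k] sw_id by auto
  moreover have "\<forall>z \<in> line_dir (of_int (k*Q)) (1 + \<i>). D1 0 k z = z" using fixD1[of k] unfolding L1_def by blast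
  moreover have "(1 + \<i>) \<noteq> (0::complex)" by (simp add: complex_eq_iff)
  ultimately show ?thesis unfolding is_mirror_def by blast
qed

lemma mirror_D2: "is_mirror (D2 m 0)"
proof -
  have "isometry (D2 m 0)" using sym_D2[of m 0] unfolding is_symmetry_def by blast
  moreover have "D2 m 0 \<noteq> id" using sw_D2[of m 0] sw_id by auto
  moreover have "\<forall>z \<in> line_dir (of_int (1 + m*P)) (1 - \<i>). D2 m 0 z = z" using fixD2[of m] unfolding L2_def by blast
  moreover have "(1 - \<i>) \<noteq> (0::complex)" by (simp add: complex_eq_iff)
  ultimately show ?thesis unfolding is_mirror_def by blast
qed

lemma mirror_char:
  assumes g: "g \<in> G1 dk" and mir: "is_mirror g"
  shows "(\<exists>k. g = D1 0 k) \<or> (\<exists>m. g = D2 m 0)"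
proof -
  from mir obtain a d where d0: "d \<noteq> 0" and fx: "\<forall>z \<in> line_dir a d. g z = z" and nid: "g \<noteq> id"
    unfolding is_mirror_def by blast
  have "a \<in> line_dir a d" unfolding line_dir_def by (rule CollectI, rule exI[of _ 0]) simp
  then have fa: "g a = a" using fx by blast
  have "a + d \<in> line_dir a d" unfolding line_dir_def by (rule CollectI, rule exI[of _ 1]) simp
  then have fd: "g (a + d) = a + d" using fx by blast
  from g have "(\<exists>m k. g = T m k) \<or> (\<exists>m k. g = R m k) \<or> (\<exists>m k. g = D1 m k) \<or> (\<exists>m k. g = D2 m k)"
    by (simp only: G1_iff)
  then show ?thesis
  proof (elim disjE exE)
    fix m k assume e: "g = T m k"
    then have "lat m k = 0" using fa by (simp add: T_def)
    then have "g = id" unfolding e T_def by (simp add: id_def)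
    then show ?thesis using nid by simp
  next
    fix m k assume e: "g = R m k"
    have "- a + lat1 m k = a" "- (a + d) + lat1 m k = a + d" using fa fd unfolding e R_def by simp_all
    then have "d = 0" by (simp add: algebra_simps)
    then show ?thesis using d0 by simp
  next
    fix m k assume e: "g = D1 m k"
    have "Re (D1 m k a) = Re a" "Im (D1 m k a) = Im a" using fa e by simp_all
    then have "Im a + (of_int m * of_int P + of_int k * of_int Q) = Re a"
      "Re a + (of_int m * of_int P - of_int k * of_int Q) = Im a"
      by (simp_all add: D1_def lat_def)
    then have "real_of_int m * of_int P = 0" by linarith
    then have "m = 0" using Ppos by simp
    then show ?thesis using e by blast
  next
    fix m k assume e: "g = D2 m k"
    have "Re (D2 m k a) = Re a" "Im (D2 m k a) = Im a" using fa e by simp_all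
    then have "- Im a + (1 + of_int m * of_int P + of_int k * of_int Q) = Re a"
      "- Re a + (1 + of_int m * of_int P - of_int k * of_int Q) = Im a"
      by (simp_all add: D2_def lat1_def)
    then have "real_of_int k * of_int Q = 0" by linarith
    then have "k = 0" using Qpos by simp
    then show ?thesis using e by blast
  qed
qed

lemma mirror_lines_iff: "l \<in> mirror_lines (G1 dk) \<longleftrightarrow> (\<exists>k. l = L1 k) \<or> (\<exists>m. l = L2 m)"
proof
  assume "l \<in> mirror_lines (G1 dk)"
  then obtain g where l: "l = {z. g z = z}" and g: "g \<in> G1 dk" "is_mirror g"
    unfolding mirror_lines_def by blast
  from mirror_char[OF g] show "(\<exists>k. l = L1 k) \<or> (\<exists>m. l = L2 m)"
    using l fixD1 fixD2 by auto
next
  assume "(\<exists>k. l = L1 k) \<or> (\<exists>m. l = L2 m)"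
  then show "l \<in> mirror_lines (G1 dk)"
  proof (elim disjE exE)
    fix k assume l: "l = L1 k"
    have "D1 0 k \<in> G1 dk" unfolding G1_iff by blast
    then show ?thesis unfolding mirror_lines_def l fixD1[symmetric] using mirror_D1 by blast
  next
    fix m assume l: "l = L2 m"
    have "D2 m 0 \<in> G1 dk" unfolding G1_iff by blast
    then show ?thesis unfolding mirror_lines_def l fixD2[symmetric] using mirror_D2 by blast
  qed
qed

lemma sw_ht: "swaps_strands (half_turn c) = False" by (simp add: swaps_strands_def half_turn_def)

lemma ht_R: "half_turn c = R m k \<longleftrightarrow> c = pt m k"
proof
  assume "half_turn c = R m k"
  then have "half_turn c 0 = R m k 0" by simp
  then have "2 * c = lat1 m k" by (simp add: half_turn_def R_def)
  then show "c = pt m k" by (simp add: lat1_def pt_def complex_eq_iff field_simps)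
next
  assume "c = pt m k"
  then show "half_turn c = R m k"
    by (intro ext) (simp add: half_turn_def R_def lat1_def pt_def complex_eq_iff field_simps)
qed

lemma ht_T: "half_turn c \<noteq> T m k"
proof
  assume h: "half_turn c = T m k"
  then have "half_turn c 0 = T m k 0" "half_turn c 1 = T m k 1" by simp_all
  then have "2 * c = lat m k" "2 * c - 1 = 1 + lat m k" by (simp_all add: half_turn_def T_def)
  then show False by (simp add: complex_eq_iff)
qed

lemma ht_H1: "half_turn c \<in> H1 dk \<longleftrightarrow> (\<exists>m k. c = pt m k)"
  unfolding H1_iff using ht_T ht_R by blast

lemma ht_G1: "half_turn c \<in> G1 dk \<longleftrightarrow> (\<exists>m k. c = pt m k)"
proof
  assume "half_turn c \<in> G1 dk"
  then obtain flip where "is_symmetry dk (half_turn c) flip" unfolding G1_def by blast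
  moreover then have "flip = False" using flip_sw sw_ht by blast
  ultimately have "half_turn c \<in> H1 dk" unfolding H1_def by simp
  then show "\<exists>m k. c = pt m k" using ht_H1 by blast
next
  assume "\<exists>m k. c = pt m k"
  then have "half_turn c \<in> H1 dk" using ht_H1 by blast
  then show "half_turn c \<in> G1 dk" unfolding H1_def G1_def by blast
qed

lemma C_G1: "half_turn_centres (G1 dk) = {c. \<exists>m k. c = pt m k}"
  unfolding half_turn_centres_def using ht_G1 by blast
lemma C_H1: "half_turn_centres (H1 dk) = {c. \<exists>m k. c = pt m k}"
  unfolding half_turn_centres_def using ht_H1 by blast

lemma centre_pt: "is_cell_centre (pt m k) \<longleftrightarrow> even (m*P + k*Q)"
  unfolding pt_def by (rule centre_gen) simp
lemma corner_pt: "is_cell_corner (pt m k) \<longleftrightarrow> odd (m*P + k*Q)"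
  unfolding pt_def by (rule corner_gen) simp

lemma CL1: "half_turn_centres (G1 dk) \<inter> L1 k = range (\<lambda>m. pt m k)"
proof (rule set_eqI)
  fix x
  have key: "pt m' k' \<in> L1 k \<longleftrightarrow> k' = k" for m' k'
  proof -
    have "pt m' k' \<in> L1 k \<longleftrightarrow> real_of_int k' * of_int Q = of_int k * of_int Q"
      unfolding L1_def line11 pt_def by (simp add: field_simps)
    also have "\<dots> \<longleftrightarrow> k' = k" using Qpos by simp
    finally show ?thesis .
  qed
  show "x \<in> half_turn_centres (G1 dk) \<inter> L1 k \<longleftrightarrow> x \<in> range (\<lambda>m. pt m k)"
    unfolding C_G1 using key by auto
qed

lemma CL2: "half_turn_centres (G1 dk) \<inter> L2 m = range (\<lambda>k. pt m k)"
proof (rule set_eqI)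
  fix x
  have key: "pt m' k' \<in> L2 m \<longleftrightarrow> m' = m" for m' k'
  proof -
    have "pt m' k' \<in> L2 m \<longleftrightarrow> real_of_int m' * of_int P = of_int m * of_int P"
      unfolding L2_def line1m pt_def by (simp add: field_simps)
    also have "\<dots> \<longleftrightarrow> m' = m" using Ppos by simp
    finally show ?thesis .
  qed
  show "x \<in> half_turn_centres (G1 dk) \<inter> L2 m \<longleftrightarrow> x \<in> range (\<lambda>k. pt m k)"
    unfolding C_G1 using key by auto
qed

lemma pt_m: "pt m k = pt 0 k + of_int m * Complex (of_int P / 2) (of_int P / 2)"
  by (simp add: pt_def complex_eq_iff field_simps)
lemma pt_k: "pt m k = pt m 0 + of_int k * Complex (of_int Q / 2) (- of_int Q / 2)"
  by (simp add: pt_def complex_eq_iff field_simps)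

lemma alt_L1: "odd P \<Longrightarrow> alternating_on (half_turn_centres (G1 dk)) (L1 k)"
  by (rule alt_gen[OF CL1 pt_m centre_pt corner_pt])
     (simp add: algebra_simps)

lemma alt_L2: "odd Q \<Longrightarrow> alternating_on (half_turn_centres (G1 dk)) (L2 m)"
  by (rule alt_gen[OF CL2 pt_k centre_pt corner_pt])
     (simp add: algebra_simps)

end


context rsat begin

lemma PQ_odd: "odd P \<or> odd Q"
proof (rule ccontr)
  assume "\<not> (odd P \<or> odd Q)"
  then have "even P" "even Q" by auto
  then obtain x y where x: "P = 2*x" and y: "Q = 2*y" by (auto elim!: evenE)
  have "4 dvd 2*P" unfolding x by simp
  then have a: "4 dvd int s + 1" using Pd by (rule dvd_trans)
  have "4 dvd 2*Q" unfolding y by simp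
  then have b: "4 dvd int s - 1" using Qd by (rule dvd_trans)
  have "(4::int) dvd (int s + 1) - (int s - 1)" using a b by (rule dvd_diff)
  then show False by simp
qed

lemma sp26: "species26 dk"
  unfolding species26_def
proof (intro conjI)
  show "type_pmm (G1 dk)" by (rule type_pmm_G1)
  show "type_p2 (H1 dk)" by (rule type_p2_H1)
  show "\<forall>g\<in>G1 dk. is_mirror g \<longrightarrow> (\<exists>a. \<exists>d\<in>{1 + \<i>, 1 - \<i>}. {z. g z = z} = line_dir a d)"
  proof (intro ballI impI)
    fix g assume g: "g \<in> G1 dk" "is_mirror g"
    from mirror_char[OF g] show "\<exists>a. \<exists>d\<in>{1 + \<i>, 1 - \<i>}. {z. g z = z} = line_dir a d"
    proof (elim disjE exE)
      fix k assume "g = D1 0 k"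
      then have "{z. g z = z} = line_dir (of_int (k*Q)) (1 + \<i>)" using fixD1[of k] unfolding L1_def by simp
      then show ?thesis by (intro exI[of _ "of_int (k*Q)"] bexI[of _ "1 + \<i>"]) simp_all
    next
      fix m assume "g = D2 m 0"
      then have "{z. g z = z} = line_dir (of_int (1 + m*P)) (1 - \<i>)" using fixD2[of m] unfolding L2_def by simp
      then show ?thesis by (intro exI[of _ "of_int (1 + m*P)"] bexI[of _ "1 - \<i>"]) simp_all
    qed
  qed
  show "\<forall>g\<in>G1 dk. is_mirror g \<longrightarrow> is_symmetry dk g True \<and> g \<notin> H1 dk"
  proof (intro ballI impI)
    fix g assume g: "g \<in> G1 dk" "is_mirror g"
    have "swaps_strands g = True \<and> is_symmetry dk g True"
      using mirror_char[OF g]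
    proof (elim disjE exE)
      fix k assume "g = D1 0 k" then show ?thesis using sw_D1 sym_D1 by simp
    next
      fix m assume "g = D2 m 0" then show ?thesis using sw_D2 sym_D2 by simp
    qed
    then have sw: "swaps_strands g = True" and sy: "is_symmetry dk g True" by simp_all
    have "g \<notin> H1 dk"
    proof
      assume "g \<in> H1 dk"
      then have "is_symmetry dk g False" unfolding H1_def by simp
      then have "False = swaps_strands g" by (rule flip_sw)
      then show False using sw by simp
    qed
    then show "is_symmetry dk g True \<and> g \<notin> H1 dk" using sy by simp
  qed
  show "\<exists>c\<in>half_turn_centres (H1 dk). is_cell_centre c"
  proof
    show "pt 0 0 \<in> half_turn_centres (H1 dk)" unfolding C_H1 by blast
    show "is_cell_centre (pt 0 0)" unfolding centre_pt by simp
  qed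
  show "\<exists>c\<in>half_turn_centres (H1 dk). is_cell_corner c"
  proof (cases "odd P")
    case True
    show ?thesis
    proof
      show "pt 1 0 \<in> half_turn_centres (H1 dk)" unfolding C_H1 by blast
      show "is_cell_corner (pt 1 0)" unfolding corner_pt using True by simp
    qed
  next
    case False
    then have oq: "odd Q" using PQ_odd by blast
    show ?thesis
    proof
      show "pt 0 1 \<in> half_turn_centres (H1 dk)" unfolding C_H1 by blast
      show "is_cell_corner (pt 0 1)" unfolding corner_pt using oq by simp
    qed
  qed
qed

lemma sp26o: assumes "odd P" "odd Q" shows "species26o dk"
  unfolding species26o_def
proof (intro conjI sp26 ballI)
  fix l assume "l \<in> mirror_lines (G1 dk)"
  then have "(\<exists>k. l = L1 k) \<or> (\<exists>m. l = L2 m)" by (simp only: mirror_lines_iff)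
  then show "alternating_on (half_turn_centres (G1 dk)) l"
  proof (elim disjE exE)
    fix k assume "l = L1 k" then show ?thesis using alt_L1[OF assms(1)] by simp
  next
    fix m assume "l = L2 m" then show ?thesis using alt_L2[OF assms(2)] by simp
  qed
qed

lemma par_L1: "parallel_to (L1 k) (1 + \<i>)" unfolding parallel_to_def L1_def by blast
lemma par_L2: "parallel_to (L2 m) (1 - \<i>)" unfolding parallel_to_def L2_def by blast

lemma pick1: "of_int (k*Q) \<in> L1 k" unfolding L1_def line11 by simp
lemma pick2: "of_int (1 + m*P) \<in> L2 m" unfolding L2_def line1m by simp

lemma npar_L2: "\<not> parallel_to (L2 m) (1 + \<i>)"
proof
  assume "parallel_to (L2 m) (1 + \<i>)"
  then obtain a where a: "L2 m = line_dir a (1 + \<i>)" unfolding parallel_to_def by blast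
  have z1: "of_int (1 + m*P) \<in> L2 m" by (rule pick2)
  have z2: "of_int (1 + m*P) + (1 - \<i>) \<in> L2 m" unfolding L2_def line1m by simp
  from z1 z2 show False unfolding a line11 by simp
qed

lemma npar_L1: "\<not> parallel_to (L1 k) (1 - \<i>)"
proof
  assume "parallel_to (L1 k) (1 - \<i>)"
  then obtain a where a: "L1 k = line_dir a (1 - \<i>)" unfolding parallel_to_def by blast
  have z1: "of_int (k*Q) \<in> L1 k" by (rule pick1)
  have z2: "of_int (k*Q) + (1 + \<i>) \<in> L1 k" unfolding L1_def line11 by simp
  from z1 z2 show False unfolding a line1m by simp
qed

lemma M_par1: "l \<in> mirror_lines (G1 dk) \<Longrightarrow> parallel_to l (1 + \<i>) \<Longrightarrow> \<exists>k. l = L1 k"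
proof -
  assume l: "l \<in> mirror_lines (G1 dk)" and p: "parallel_to l (1 + \<i>)"
  from l have "(\<exists>k. l = L1 k) \<or> (\<exists>m. l = L2 m)" by (simp only: mirror_lines_iff)
  then show ?thesis
  proof (elim disjE exE)
    fix k assume "l = L1 k" then show ?thesis by blast
  next
    fix m assume "l = L2 m" then show ?thesis using p npar_L2[of m] by simp
  qed
qed
lemma M_par2: "l \<in> mirror_lines (G1 dk) \<Longrightarrow> parallel_to l (1 - \<i>) \<Longrightarrow> \<exists>m. l = L2 m"
proof -
  assume l: "l \<in> mirror_lines (G1 dk)" and p: "parallel_to l (1 - \<i>)"
  from l have "(\<exists>k. l = L1 k) \<or> (\<exists>m. l = L2 m)" by (simp only: mirror_lines_iff)
  then show ?thesis
  proof (elim disjE exE)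
    fix m assume "l = L2 m" then show ?thesis by blast
  next
    fix k assume "l = L1 k" then show ?thesis using p npar_L1[of k] by simp
  qed
qed

lemma L1_in: "L1 k \<in> mirror_lines (G1 dk)" unfolding mirror_lines_iff by blast
lemma L2_in: "L2 m \<in> mirror_lines (G1 dk)" unfolding mirror_lines_iff by blast

lemma coordL1: assumes "z \<in> L1 k" shows "Im (cnj (1 + \<i>) * z) = 0 + (- of_int Q) * of_int k"
proof -
  have h: "Re z - Im z = of_int k * of_int Q" using assms unfolding L1_def line11 by simp
  have "Im (cnj (1 + \<i>) * z) = Im z - Re z" by simp
  also have "\<dots> = - (of_int k * of_int Q)" using h by linarith
  finally show ?thesis by (simp add: mult.commute)
qed
lemma coordL2: assumes "z \<in> L2 m" shows "Im (cnj (1 - \<i>) * z) = 1 + (of_int P) * of_int m"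
proof -
  have h: "Re z + Im z = 1 + of_int m * of_int P" using assms unfolding L2_def line1m by simp
  have "Im (cnj (1 - \<i>) * z) = Re z + Im z" by simp
  also have "\<dots> = 1 + of_int m * of_int P" using h by linarith
  finally show ?thesis by (simp add: mult.commute)
qed

lemma onlyL1:
  assumes "even P" "odd Q"
  shows "only_centres_on (half_turn_centres (G1 dk)) (L1 k) \<longleftrightarrow> even k"
    and "only_corners_on (half_turn_centres (G1 dk)) (L1 k) \<longleftrightarrow> odd k"
proof -
  have c: "is_cell_centre (pt m k) \<longleftrightarrow> even k" "is_cell_corner (pt m k) \<longleftrightarrow> odd k" for m
    unfolding centre_pt corner_pt using assms by simp_all
  show "only_centres_on (half_turn_centres (G1 dk)) (L1 k) \<longleftrightarrow> even k"
    unfolding only_centres_on_def CL1 using c by auto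
  show "only_corners_on (half_turn_centres (G1 dk)) (L1 k) \<longleftrightarrow> odd k"
    unfolding only_corners_on_def CL1 using c by auto
qed

lemma onlyL2:
  assumes "odd P" "even Q"
  shows "only_centres_on (half_turn_centres (G1 dk)) (L2 m) \<longleftrightarrow> even m"
    and "only_corners_on (half_turn_centres (G1 dk)) (L2 m) \<longleftrightarrow> odd m"
proof -
  have c: "is_cell_centre (pt m k) \<longleftrightarrow> even m" "is_cell_corner (pt m k) \<longleftrightarrow> odd m" for k
    unfolding centre_pt corner_pt using assms by simp_all
  show "only_centres_on (half_turn_centres (G1 dk)) (L2 m) \<longleftrightarrow> even m"
    unfolding only_centres_on_def CL2 using c by auto
  show "only_corners_on (half_turn_centres (G1 dk)) (L2 m) \<longleftrightarrow> odd m"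
    unfolding only_corners_on_def CL2 using c by auto
qed

lemma sp26e_a: assumes eP: "even P" and oQ: "odd Q" shows "species26e dk"
  unfolding species26e_def Let_def
proof (rule conjI[OF sp26], rule exI[of _ "1 + \<i>"], rule exI[of _ "1 - \<i>"], intro conjI)
  show "{1 + \<i>, 1 - \<i>} = {1 + \<i>, 1 - \<i>}" by simp
  show "1 + \<i> \<noteq> 1 - \<i>" by (simp add: complex_eq_iff)
  show "\<forall>l\<in>mirror_lines (G1 dk). parallel_to l (1 + \<i>) \<longrightarrow>
        only_centres_on (half_turn_centres (G1 dk)) l \<or> only_corners_on (half_turn_centres (G1 dk)) l"
  proof (intro ballI impI)
    fix l assume "l \<in> mirror_lines (G1 dk)" "parallel_to l (1 + \<i>)"
    then obtain k where "l = L1 k" using M_par1 by blast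
    then show "only_centres_on (half_turn_centres (G1 dk)) l \<or> only_corners_on (half_turn_centres (G1 dk)) l"
      using onlyL1[OF eP oQ, of k] by simp
  qed
  show "\<forall>l1 l2. adjacent_parallel (mirror_lines (G1 dk)) (1 + \<i>) l1 l2 \<longrightarrow>
        (only_centres_on (half_turn_centres (G1 dk)) l1 \<longleftrightarrow> only_corners_on (half_turn_centres (G1 dk)) l2)"
  proof (intro allI impI)
    fix l1 l2 assume adj: "adjacent_parallel (mirror_lines (G1 dk)) (1 + \<i>) l1 l2"
    have b0: "- real_of_int Q \<noteq> 0" using Qpos by simp
    obtain k where "l1 = L1 k \<and> (l2 = L1 (k+1) \<or> l2 = L1 (k - 1))"
      using adj_gen[where Lk=L1, OF M_par1 L1_in par_L1 pick1 coordL1 b0 adj] by blast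
    then show "only_centres_on (half_turn_centres (G1 dk)) l1 \<longleftrightarrow> only_corners_on (half_turn_centres (G1 dk)) l2"
      by (auto simp: onlyL1[OF eP oQ])
  qed
  show "\<forall>l\<in>mirror_lines (G1 dk). parallel_to l (1 - \<i>) \<longrightarrow> alternating_on (half_turn_centres (G1 dk)) l"
  proof (intro ballI impI)
    fix l assume "l \<in> mirror_lines (G1 dk)" "parallel_to l (1 - \<i>)"
    then obtain m where "l = L2 m" using M_par2 by blast
    then show "alternating_on (half_turn_centres (G1 dk)) l" using alt_L2[OF oQ] by simp
  qed
qed

lemma sp26e_b: assumes oP: "odd P" and eQ: "even Q" shows "species26e dk"
  unfolding species26e_def Let_def
proof (rule conjI[OF sp26], rule exI[of _ "1 - \<i>"], rule exI[of _ "1 + \<i>"], intro conjI)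
  show "{1 - \<i>, 1 + \<i>} = {1 + \<i>, 1 - \<i>}" by auto
  show "1 - \<i> \<noteq> 1 + \<i>" by (simp add: complex_eq_iff)
  show "\<forall>l\<in>mirror_lines (G1 dk). parallel_to l (1 - \<i>) \<longrightarrow>
        only_centres_on (half_turn_centres (G1 dk)) l \<or> only_corners_on (half_turn_centres (G1 dk)) l"
  proof (intro ballI impI)
    fix l assume "l \<in> mirror_lines (G1 dk)" "parallel_to l (1 - \<i>)"
    then obtain m where "l = L2 m" using M_par2 by blast
    then show "only_centres_on (half_turn_centres (G1 dk)) l \<or> only_corners_on (half_turn_centres (G1 dk)) l"
      using onlyL2[OF oP eQ, of m] by simp
  qed
  show "\<forall>l1 l2. adjacent_parallel (mirror_lines (G1 dk)) (1 - \<i>) l1 l2 \<longrightarrow>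
        (only_centres_on (half_turn_centres (G1 dk)) l1 \<longleftrightarrow> only_corners_on (half_turn_centres (G1 dk)) l2)"
  proof (intro allI impI)
    fix l1 l2 assume adj: "adjacent_parallel (mirror_lines (G1 dk)) (1 - \<i>) l1 l2"
    have b0: "real_of_int P \<noteq> 0" using Ppos by simp
    obtain m where "l1 = L2 m \<and> (l2 = L2 (m+1) \<or> l2 = L2 (m - 1))"
      using adj_gen[where Lk=L2, OF M_par2 L2_in par_L2 pick2 coordL2 b0 adj] by blast
    then show "only_centres_on (half_turn_centres (G1 dk)) l1 \<longleftrightarrow> only_corners_on (half_turn_centres (G1 dk)) l2"
      by (auto simp: onlyL2[OF oP eQ])
  qed
  show "\<forall>l\<in>mirror_lines (G1 dk). parallel_to l (1 + \<i>) \<longrightarrow> alternating_on (half_turn_centres (G1 dk)) l"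
  proof (intro ballI impI)
    fix l assume "l \<in> mirror_lines (G1 dk)" "parallel_to l (1 + \<i>)"
    then obtain k where "l = L1 k" using M_par1 by blast
    then show "alternating_on (half_turn_centres (G1 dk)) l" using alt_L1[OF oP] by simp
  qed
qed

end

theorem theorem1:
  fixes n s :: nat
  assumes "rectangular_satin n s"
  shows "even n \<and> (n mod 4 = 2 \<longrightarrow> species26o (satin n s))
                \<and> (4 dvd n \<longrightarrow> species26e (satin n s))"
proof -
  obtain P Q where PQ: "P > 0" "Q > 0" "2*P*Q = int n" "2*P dvd int s + 1" "2*Q dvd int s - 1"
    using exPQ[OF assms] by blast
  from assms have sat: "1 < s" "s+1 < n" "coprime n s" "even n" and c2: "[int s ^ 2 = 1] (mod 2 * int n)"
    unfolding rectangular_satin_def isonemal_satin_def is_satin_def by auto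
  have "2 * int n dvd int s ^ 2 - 1" using c2 cong_iff_dvd_diff by blast
  then have s2: "int n dvd int s ^ 2 - 1" by (rule dvd_mult_right)
  have n4: "4 \<le> n" using sat by simp
  interpret r: rsat n s P Q
    using n4 sat(3) s2 PQ by unfold_locales
  have A: "n mod 4 = 2 \<longrightarrow> species26o (satin n s)"
  proof
    assume nm: "n mod 4 = 2"
    have oP: "odd P"
    proof
      assume "even P"
      then obtain x where "P = 2*x" by (rule evenE)
      then have "int n = 4 * (x * Q)" using PQ(3) by simp
      then have "(4::int) dvd int n" by simp
      then have "(4::nat) dvd n" using int_dvd_int_iff[of 4 n] by simp
      then show False using nm by simp
    qed
    have oQ: "odd Q"
    proof
      assume "even Q"
      then obtain x where "Q = 2*x" by (rule evenE)
      then have "int n = 4 * (P * x)" using PQ(3) by simp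
      then have "(4::int) dvd int n" by simp
      then have "(4::nat) dvd n" using int_dvd_int_iff[of 4 n] by simp
      then show False using nm by simp
    qed
    show "species26o (satin n s)" by (rule r.sp26o[OF oP oQ])
  qed
  have B: "4 dvd n \<longrightarrow> species26e (satin n s)"
  proof
    assume "4 dvd n"
    then have "(4::int) dvd int n" using int_dvd_int_iff[of 4 n] by simp
    then obtain c where "int n = 4 * c" by (rule dvdE)
    then have "P * Q = 2 * c" using PQ(3) by simp
    then have "even (P * Q)" by simp
    then have "even P \<or> even Q" by simp
    then show "species26e (satin n s)"
    proof
      assume eP: "even P"
      then have "odd Q" using r.PQ_odd by blast
      then show ?thesis by (rule r.sp26e_a[OF eP])
    next
      assume eQ: "even Q"
      then have "odd P" using r.PQ_odd by blast
      then show ?thesis using r.sp26e_b[OF _ eQ] by blast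
    qed
  qed
  show ?thesis using sat(4) A B by blast
qed

end
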